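(* Let $\mathcal M$ be a sufficiently saturated geometric structure with universe $M$, and let $d$ be a natural number. Let $\mathbf x=(x_1,\dots,x_n)$ and $y$ be variables, and for $i=1,\dots,r$ let $C_i(\mathbf x^i,y)$ be a formula, where $\mathbf x^i$ is a subtuple of $\mathbf x$, defining an $\mathrm{acl}(\emptyset)$-definable $(|\mathbf x^i|+1)$-curve. Then the formula $$\exists^{\ge d}y\ \bigwedge_{i=1}^r C_i(\mathbf x^i,y)$$ defines a boolean combination of $\mathrm{acl}(\emptyset)$-definable curve-based cylinders (in the variables $\mathbf x$).
   Context: A structure $\mathcal M$ is a geometric structure if every model of its theory satisfies: (1) Exchange: $a\in\mathrm{acl}(bC)\setminus\mathrm{acl}(C)\Rightarrow b\in\mathrm{acl}(aC)$; (2) Uniform finiteness: for each formula $\psi(y,\mathbf w)$ there is $k$ such that for every tuple $\mathbf a$ the set $\{b:\psi(b,\mathbf a)\}$ is infinite or has size $\le k$. Dimension of a definable set $X\subseteq M^n$ (defined by $\Phi$ over parameters $B$): the largest $d$ such that in a saturated extension some tuple satisfying $\Phi$ has a subtuple $(a_{i_1},\dots,a_{i_d})$ with $a_{i_{j+1}}\notin\mathrm{acl}(\{a_{i_1},\dots,a_{i_j}\}\cup B)$. An $A$-definable $n$-curve is a subset of $M^n$ of dimension $\le 1$ definable with parameters from $A$. A set $\tilde C\subseteq M^m$ is an $A$-definable cylinder based on an $n$-curve if there are indices $1\le i_1<\dots<i_n\le m$ and an $A$-definable $n$-curve $C$ with $\tilde C=\{(x_1,\dots,x_m)\in M^m:(x_{i_1},\dots,x_{i_n})\in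 C\}$; an $A$-definable curve-based cylinder is such a cylinder for some $n$. "$\mathrm{acl}(\emptyset)$-definable" means definable with parameters from $\mathrm{acl}(\emptyset)$. $\exists^{\ge d}y$ means "there exist at least $d$ distinct $y$". *)

theory Defs
  imports Main
begin

datatype 'f trm = Var nat | Fn 'f "'f trm list"

datatype ('f, 'r) fm =
    Eq "'f trm" "'f trm"
  | Rl 'r "'f trm list"
  | Neg "('f, 'r) fm"
  | Conj "('f, 'r) fm" "('f, 'r) fm"
  | Ex nat "('f, 'r) fm"

text \<open>A structure with universe the whole type 'a: interpretations of the
function and relation symbols.\<close>

type_synonym ('f, 'r, 'a) struct = "('f \<Rightarrow> 'a list \<Rightarrow> 'a) \<times> ('r \<Rightarrow> 'a list \<Rightarrow> bool)"

primrec evalt :: "('f, 'r, 'a) struct \<Rightarrow> (nat \<Rightarrow> 'a) \<Rightarrow> 'f trm \<Rightarrow> 'a" where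
  "evalt M e (Var i) = e i"
| "evalt M e (Fn f ts) = fst M f (map (evalt M e) ts)"

primrec sat :: "('f, 'r, 'a) struct \<Rightarrow> ('f, 'r) fm \<Rightarrow> (nat \<Rightarrow> 'a) \<Rightarrow> bool" where
  "sat M (Eq s t) e = (evalt M e s = evalt M e t)"
| "sat M (Rl R ts) e = snd M R (map (evalt M e) ts)"
| "sat M (Neg \<phi>) e = (\<not> sat M \<phi> e)"
| "sat M (Conj \<phi> \<psi>) e = (sat M \<phi> e \<and> sat M \<psi> e)"
| "sat M (Ex x \<phi>) e = (\<exists>a. sat M \<phi> (e(x := a)))"

primrec fvt :: "'f trm \<Rightarrow> nat set" where
  "fvt (Var i) = {i}"
| "fvt (Fn f ts) = \<Union> (set (map fvt ts))"

primrec fv :: "('f, 'r) fm \<Rightarrow> nat set" where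
  "fv (Eq s t) = fvt s \<union> fvt t"
| "fv (Rl R ts) = \<Union> (set (map fvt ts))"
| "fv (Neg \<phi>) = fv \<phi>"
| "fv (Conj \<phi> \<psi>) = fv \<phi> \<union> fv \<psi>"
| "fv (Ex x \<phi>) = fv \<phi> - {x}"

text \<open>Tuples in M^n are lists of length n. The set defined in M^n by \<phi> where
variables 0..n-1 are the tuple variables and every other free variable v of \<phi>
is a parameter, interpreted as e v.\<close>

definition defset :: "('f, 'r, 'a) struct \<Rightarrow> nat \<Rightarrow> ('f, 'r) fm \<Rightarrow> (nat \<Rightarrow> 'a) \<Rightarrow> 'a list set" where
  "defset M n \<phi> e = {xs. length xs = n \<and> sat M \<phi> (\<lambda>i. if i < n then xs ! i else e i)}"

definition params :: "nat \<Rightarrow> ('f, 'r) fm \<Rightarrow> (nat \<Rightarrow> 'a) \<Rightarrow> 'a set" where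
  "params n \<phi> e = e ` (fv \<phi> - {..<n})"

definition definable :: "('f, 'r, 'a) struct \<Rightarrow> 'a set \<Rightarrow> nat \<Rightarrow> 'a list set \<Rightarrow> bool" where
  "definable M A n X \<longleftrightarrow> (\<exists>\<phi> e. params n \<phi> e \<subseteq> A \<and> X = defset M n \<phi> e)"

definition acl :: "('f, 'r, 'a) struct \<Rightarrow> 'a set \<Rightarrow> 'a set" where
  "acl M B = {a. \<exists>\<phi> e. params 1 \<phi> e \<subseteq> B \<and> finite {b. sat M \<phi> (e(0 := b))} \<and> sat M \<phi> (e(0 := a))}"

definition exchange :: "('f, 'r, 'a) struct \<Rightarrow> bool" where
  "exchange M \<longleftrightarrow> (\<forall>a b C. a \<in> acl M (insert b C) - acl M C \<longrightarrow> b \<in> acl M (insert a C))"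

text \<open>Uniform finiteness: for \<psi>(y, w) (y = variable 0, w = the other variables).\<close>
definition uniformly_finite :: "('f, 'r, 'a) struct \<Rightarrow> bool" where
  "uniformly_finite M \<longleftrightarrow> (\<forall>\<psi>. \<exists>k::nat. \<forall>e.
      infinite {b. sat M \<psi> (e(0 := b))} \<or> card {b. sat M \<psi> (e(0 := b))} \<le> k)"

definition geometric :: "('f, 'r, 'a) struct \<Rightarrow> bool" where
  "geometric M \<longleftrightarrow> exchange M \<and> uniformly_finite M"

text \<open>omega-saturation: every finitely satisfiable set of formulas in the variable 0
with finitely many parameters (the values of e) is realised in M.\<close>
definition omega_saturated :: "('f, 'r, 'a) struct \<Rightarrow> bool" where
  "omega_saturated M \<longleftrightarrow> (\<forall>(\<Sigma> :: ('f, 'r) fm set) (e :: nat \<Rightarrow> 'a). finite (range e) \<longrightarrow>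
      (\<forall>\<Sigma>0 \<subseteq> \<Sigma>. finite \<Sigma>0 \<longrightarrow> (\<exists>b. \<forall>\<phi>\<in>\<Sigma>0. sat M \<phi> (e(0 := b)))) \<longrightarrow>
      (\<exists>b. \<forall>\<phi>\<in>\<Sigma>. sat M \<phi> (e(0 := b))))"

definition indep_ge :: "('f, 'r, 'a) struct \<Rightarrow> 'a set \<Rightarrow> 'a list set \<Rightarrow> nat \<Rightarrow> bool" where
  "indep_ge M B X d \<longleftrightarrow> (\<exists>xs\<in>X. \<exists>idx. length idx = d \<and> sorted_wrt (<) idx \<and>
      (\<forall>i\<in>set idx. i < length xs) \<and>
      (\<forall>j<d. xs ! (idx ! j) \<notin> acl M (B \<union> set (map ((!) xs) (take j idx)))))"

text \<open>dim X \<le> k, X defined over parameter set B: the largest such d is \<le> k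
(vacuous for the empty set).\<close>
definition dim_le :: "('f, 'r, 'a) struct \<Rightarrow> 'a set \<Rightarrow> 'a list set \<Rightarrow> nat \<Rightarrow> bool" where
  "dim_le M B X k \<longleftrightarrow> (\<forall>d. indep_ge M B X d \<longrightarrow> d \<le> k)"

definition is_curve :: "('f, 'r, 'a) struct \<Rightarrow> 'a set \<Rightarrow> nat \<Rightarrow> 'a list set \<Rightarrow> bool" where
  "is_curve M A n X \<longleftrightarrow> (\<exists>\<phi> e. params n \<phi> e \<subseteq> A \<and> X = defset M n \<phi> e \<and>
      dim_le M (params n \<phi> e) X 1)"

definition cylinder :: "('f, 'r, 'a) struct \<Rightarrow> 'a set \<Rightarrow> nat \<Rightarrow> 'a list set \<Rightarrow> bool" where
  "cylinder M A m Y \<longleftrightarrow> (\<exists>idx C. sorted_wrt (<) idx \<and> (\<forall>i\<in>set idx. i < m) \<and>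
      is_curve M A (length idx) C \<and> Y = {xs. length xs = m \<and> map ((!) xs) idx \<in> C})"

inductive boolcomb :: "'b set \<Rightarrow> 'b set set \<Rightarrow> 'b set \<Rightarrow> bool" for U S where
  gen: "X \<in> S \<Longrightarrow> boolcomb U S X"
| compl: "boolcomb U S X \<Longrightarrow> boolcomb U S (U - X)"
| inter: "boolcomb U S X \<Longrightarrow> boolcomb U S Y \<Longrightarrow> boolcomb U S (X \<inter> Y)"
| union: "boolcomb U S X \<Longrightarrow> boolcomb U S Y \<Longrightarrow> boolcomb U S (X \<union> Y)"

end

theory Submission
  imports Defs
begin


lemma evalt_coinc: "(\<forall>v\<in>fvt t. e v = e' v) \<Longrightarrow> evalt M e t = evalt M e' t"
proof (induction t)
  case (Fn f ts)
  have "map (evalt M e) ts = map (evalt M e') ts" using Fn by (auto intro!: map_cong)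
  then show ?case by (metis evalt.simps(2))
qed simp

lemma sat_coinc: "(\<forall>v\<in>fv \<phi>. e v = e' v) \<Longrightarrow> sat M \<phi> e = sat M \<phi> e'"
proof (induction \<phi> arbitrary: e e')
  case (Eq s t) then show ?case using evalt_coinc[of s e e' M] evalt_coinc[of t e e' M] by auto
next
  case (Rl R ts)
  have "map (evalt M e) ts = map (evalt M e') ts"
    using Rl by (intro map_cong) (auto intro!: evalt_coinc)
  then show ?case by (metis sat.simps(2))
next
  case (Ex x \<phi>)
  have "\<And>a. sat M \<phi> (e(x:=a)) = sat M \<phi> (e'(x:=a))"
    by (rule Ex.IH) (use Ex.prems in auto)
  then show ?case by simp
next
  case (Conj \<phi>1 \<phi>2)
  have "sat M \<phi>1 e = sat M \<phi>1 e'" by (rule Conj.IH(1)) (use Conj.prems in auto)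
  moreover have "sat M \<phi>2 e = sat M \<phi>2 e'" by (rule Conj.IH(2)) (use Conj.prems in auto)
  ultimately show ?case by simp
qed auto

lemma finite_fvt: "finite (fvt t)" by (induction t) auto
lemma finite_fv: "finite (fv \<phi>)" by (induction \<phi>) (auto simp: finite_fvt)

primrec rnt :: "(nat \<Rightarrow> nat) \<Rightarrow> 'f trm \<Rightarrow> 'f trm" where
  "rnt \<sigma> (Var i) = Var (\<sigma> i)"
| "rnt \<sigma> (Fn f ts) = Fn f (map (rnt \<sigma>) ts)"

primrec rn :: "(nat \<Rightarrow> nat) \<Rightarrow> ('f,'r) fm \<Rightarrow> ('f,'r) fm" where
  "rn \<sigma> (Eq s t) = Eq (rnt \<sigma> s) (rnt \<sigma> t)"
| "rn \<sigma> (Rl R ts) = Rl R (map (rnt \<sigma>) ts)"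
| "rn \<sigma> (Neg \<phi>) = Neg (rn \<sigma> \<phi>)"
| "rn \<sigma> (Conj \<phi> \<psi>) = Conj (rn \<sigma> \<phi>) (rn \<sigma> \<psi>)"
| "rn \<sigma> (Ex x \<phi>) = Ex (\<sigma> x) (rn \<sigma> \<phi>)"

lemma evalt_rnt: "evalt M e (rnt \<sigma> t) = evalt M (e \<circ> \<sigma>) t"
proof (induction t)
  case (Fn f ts)
  have "map (\<lambda>x. evalt M e (rnt \<sigma> x)) ts = map (evalt M (e \<circ> \<sigma>)) ts" using Fn.IH by (rule map_cong[OF refl])
  then show ?case by (simp only: rnt.simps evalt.simps map_map comp_def)
qed simp

lemma fvt_rnt: "fvt (rnt \<sigma> t) = \<sigma> ` fvt t"
  by (induction t) auto

lemma sat_rn: "inj \<sigma> \<Longrightarrow> sat M (rn \<sigma> \<phi>) e = sat M \<phi> (e \<circ> \<sigma>)"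
proof (induction \<phi> arbitrary: e)
  case (Ex x \<phi>)
  have "\<And>a. (e(\<sigma> x := a)) \<circ> \<sigma> = (e \<circ> \<sigma>)(x := a)"
    using Ex.prems by (auto simp: fun_eq_iff inj_eq)
  then show ?case using Ex.IH[OF Ex.prems] by (simp del: comp_apply fun_upd_apply)
qed (auto simp: evalt_rnt comp_def)

lemma fv_rn: "inj \<sigma> \<Longrightarrow> fv (rn \<sigma> \<phi>) = \<sigma> ` fv \<phi>"
  by (induction \<phi>) (auto simp: fvt_rnt inj_eq image_Un image_set_diff)

fun wrap :: "nat \<Rightarrow> (nat \<Rightarrow> nat) \<Rightarrow> nat list \<Rightarrow> ('f,'r) fm \<Rightarrow> ('f,'r) fm" where
  "wrap K \<sigma> [] \<psi> = \<psi>"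
| "wrap K \<sigma> (v # vs) \<psi> = Ex (K + v) (Conj (Eq (Var (K + v)) (Var (\<sigma> v))) (wrap K \<sigma> vs \<psi>))"

lemma sat_wrap:
  assumes "\<forall>v\<in>set vs. \<sigma> v < K"
  shows "sat M (wrap K \<sigma> vs \<psi>) e =
     sat M \<psi> (\<lambda>w. if K \<le> w \<and> w - K \<in> set vs then e (\<sigma> (w - K)) else e w)"
  using assms
proof (induction vs arbitrary: e)
  case Nil then show ?case by simp
next
  case (Cons v vs)
  let ?e' = "e(K + v := e (\<sigma> v))"
  have "sat M (wrap K \<sigma> (v # vs) \<psi>) e = sat M (wrap K \<sigma> vs \<psi>) ?e'"
    using Cons.prems by auto
  also have "\<dots> = sat M \<psi> (\<lambda>w. if K \<le> w \<and> w - K \<in> set vs then ?e' (\<sigma> (w - K)) else ?e' w)"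
    using Cons by auto
  also have "(\<lambda>w. if K \<le> w \<and> w - K \<in> set vs then ?e' (\<sigma> (w - K)) else ?e' w)
     = (\<lambda>w. if K \<le> w \<and> w - K \<in> set (v#vs) then e (\<sigma> (w - K)) else e w)"
    using Cons.prems by (auto simp: fun_eq_iff)
  finally show ?case .
qed

lemma fv_wrap: "fv (wrap K \<sigma> vs \<psi>) \<subseteq> (fv \<psi> - (\<lambda>v. K + v) ` set vs) \<union> \<sigma> ` set vs"
  by (induction vs) auto

lemma subst_ex: "\<exists>\<psi>. fv \<psi> \<subseteq> \<sigma> ` fv \<phi> \<and> (\<forall>e. sat M \<psi> e = sat M \<phi> (e \<circ> \<sigma>))"
proof -
  obtain vs where vs: "set vs = fv \<phi>" using finite_list[OF finite_fv[of \<phi>]] by blast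
  define K where "K = Suc (Max (insert 0 (\<sigma> ` fv \<phi>)))"
  have K: "\<forall>v\<in>set vs. \<sigma> v < K"
  proof
    fix v assume "v \<in> set vs"
    then have "\<sigma> v \<in> insert 0 (\<sigma> ` fv \<phi>)" using vs by simp
    then have "\<sigma> v \<le> Max (insert 0 (\<sigma> ` fv \<phi>))" by (simp add: finite_fv)
    then show "\<sigma> v < K" unfolding K_def by simp
  qed
  define sh where "sh = (\<lambda>v::nat. K + v)"
  have ish: "inj sh" by (auto simp: sh_def inj_def)
  define \<psi> where "\<psi> = wrap K \<sigma> vs (rn sh \<phi>)"
  have "fv \<psi> \<subseteq> \<sigma> ` fv \<phi>"
  proof -
    have "fv \<psi> \<subseteq> (sh ` fv \<phi> - sh ` fv \<phi>) \<union> \<sigma> ` fv \<phi>"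
      using fv_wrap[of K \<sigma> vs "rn sh \<phi>"] fv_rn[OF ish, of \<phi>] vs unfolding \<psi>_def sh_def by simp
    then show ?thesis by simp
  qed
  moreover have "sat M \<psi> e = sat M \<phi> (e \<circ> \<sigma>)" for e
  proof -
    have "sat M \<psi> e = sat M \<phi> ((\<lambda>w. if K \<le> w \<and> w - K \<in> set vs then e (\<sigma> (w - K)) else e w) \<circ> sh)"
      unfolding \<psi>_def by (simp only: sat_wrap[OF K] sat_rn[OF ish])
    also have "\<dots> = sat M \<phi> (e \<circ> \<sigma>)"
    proof (rule sat_coinc, rule ballI)
      fix v assume "v \<in> fv \<phi>"
      then have "v \<in> set vs" using vs by simp
      then show "((\<lambda>w. if K \<le> w \<and> w - K \<in> set vs then e (\<sigma> (w - K)) else e w) \<circ> sh) v = (e \<circ> \<sigma>) v"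
        by (simp add: sh_def)
    qed
    finally show ?thesis .
  qed
  ultimately show ?thesis by blast
qed




definition val :: "nat \<Rightarrow> 'a list \<Rightarrow> (nat \<Rightarrow> 'a) \<Rightarrow> nat \<Rightarrow> 'a" where
  "val n xs e = (\<lambda>i. if i < n then xs ! i else e i)"

lemma defset_val: "defset M n \<phi> e = {xs. length xs = n \<and> sat M \<phi> (val n xs e)}"
  by (simp add: defset_def val_def)

lemma def_intro:
  assumes "\<And>xs. length xs = n \<Longrightarrow> xs \<in> X \<longleftrightarrow> sat M \<phi> (val n xs e)"
    and "\<And>xs. xs \<in> X \<Longrightarrow> length xs = n"
    and "\<And>w. w \<in> fv \<phi> \<Longrightarrow> n \<le> w \<Longrightarrow> e w \<in> B"
  shows "definable M B n X"
proof -
  have "X = defset M n \<phi> e" using assms(1,2) by (auto simp: defset_val)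
  moreover have "params n \<phi> e \<subseteq> B" using assms(3) by (force simp: params_def not_less)
  ultimately show ?thesis unfolding definable_def by blast
qed

lemma def_elim:
  assumes "definable M B n X"
  obtains \<phi> e where "\<And>xs. length xs = n \<Longrightarrow> xs \<in> X \<longleftrightarrow> sat M \<phi> (val n xs e)"
    and "\<And>xs. xs \<in> X \<Longrightarrow> length xs = n"
    and "\<And>w. w \<in> fv \<phi> \<Longrightarrow> n \<le> w \<Longrightarrow> e w \<in> B"
proof -
  from assms obtain \<phi> e where h: "params n \<phi> e \<subseteq> B" "X = defset M n \<phi> e"
    unfolding definable_def by blast
  show ?thesis
  proof (rule that[of \<phi> e])
    show "\<And>xs. length xs = n \<Longrightarrow> xs \<in> X \<longleftrightarrow> sat M \<phi> (val n xs e)" using h(2) by (simp add: defset_val)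
    show "\<And>xs. xs \<in> X \<Longrightarrow> length xs = n" using h(2) by (simp add: defset_val)
    show "\<And>w. w \<in> fv \<phi> \<Longrightarrow> n \<le> w \<Longrightarrow> e w \<in> B" using h(1) by (auto simp: params_def)
  qed
qed

definition tt :: "('f,'r) fm" where "tt = Ex 0 (Eq (Var 0) (Var 0))"
lemma sat_tt[simp]: "sat M tt e" by (simp add: tt_def)
lemma fv_tt[simp]: "fv tt = {}" by (simp add: tt_def)

lemma def_univ: "definable M B n {xs. length xs = n}"
  by (rule def_intro[where \<phi> = tt and e = undefined]) auto

lemma def_mono: "definable M B n X \<Longrightarrow> B \<subseteq> B' \<Longrightarrow> definable M B' n X"
  unfolding definable_def by blast

lemma def_compl: "definable M B n X \<Longrightarrow> definable M B n ({xs. length xs = n} - X)"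
proof (erule def_elim)
  fix \<phi> e assume h: "\<And>xs. length xs = n \<Longrightarrow> xs \<in> X \<longleftrightarrow> sat M \<phi> (val n xs e)"
    "\<And>w. w \<in> fv \<phi> \<Longrightarrow> n \<le> w \<Longrightarrow> e w \<in> B"
  show ?thesis by (rule def_intro[where \<phi> = "Neg \<phi>" and e = e]) (use h in auto)
qed

lemma def_inter:
  fixes M :: "('f,'r,'a) struct"
  assumes "definable M B n X" "definable M B n Y"
  shows "definable M B n (X \<inter> Y)"
proof -
  obtain \<phi>1 e1 where h1: "\<And>xs. length xs = n \<Longrightarrow> xs \<in> X \<longleftrightarrow> sat M \<phi>1 (val n xs e1)"
    "\<And>xs. xs \<in> X \<Longrightarrow> length xs = n" "\<And>w. w \<in> fv \<phi>1 \<Longrightarrow> n \<le> w \<Longrightarrow> e1 w \<in> B"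
    by (rule def_elim[OF assms(1)]) blast
  obtain \<phi>2 e2 where h2: "\<And>xs. length xs = n \<Longrightarrow> xs \<in> Y \<longleftrightarrow> sat M \<phi>2 (val n xs e2)"
    "\<And>w. w \<in> fv \<phi>2 \<Longrightarrow> n \<le> w \<Longrightarrow> e2 w \<in> B"
    by (rule def_elim[OF assms(2)]) blast
  define K where "K = Suc (Max (insert n (fv \<phi>1)))"
  have K1: "v < K" if "v \<in> fv \<phi>1" for v
  proof -
    have "v \<le> Max (insert n (fv \<phi>1))" using that by (simp add: finite_fv)
    then show ?thesis by (simp add: K_def)
  qed
  have Kn: "n < K" by (simp add: K_def finite_fv le_imp_less_Suc)
  define \<sigma> where "\<sigma> = (\<lambda>v. if v < n then v else K + v)"
  obtain \<psi> where \<psi>: "fv \<psi> \<subseteq> \<sigma> ` fv \<phi>2" "\<And>e. sat M \<psi> e = sat M \<phi>2 (e \<circ> \<sigma>)"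
    using subst_ex by blast
  define e where "e = (\<lambda>v. if v < K then e1 v else e2 (v - K))"
  show ?thesis
  proof (rule def_intro[where \<phi> = "Conj \<phi>1 \<psi>" and e = e])
    fix xs :: "'a list" assume len: "length xs = n"
    have "val n xs e \<circ> \<sigma> = val n xs e2"
      using Kn by (auto simp: fun_eq_iff val_def \<sigma>_def e_def)
    moreover have "sat M \<phi>1 (val n xs e) = sat M \<phi>1 (val n xs e1)"
      by (rule sat_coinc) (auto simp: val_def e_def dest: K1)
    ultimately show "xs \<in> X \<inter> Y \<longleftrightarrow> sat M (Conj \<phi>1 \<psi>) (val n xs e)"
      using h1(1)[OF len] h2(1)[OF len] \<psi>(2) by simp
  next
    fix xs assume "xs \<in> X \<inter> Y" then show "length xs = n" using h1(2) by blast
  next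
    fix w assume w: "w \<in> fv (Conj \<phi>1 \<psi>)" "n \<le> w"
    show "e w \<in> B"
    proof (cases "w \<in> fv \<phi>1")
      case True then show ?thesis using K1 h1(3) w(2) by (simp add: e_def)
    next
      case False
      then have "w \<in> fv \<psi>" using w by simp
      then obtain v where v: "v \<in> fv \<phi>2" "w = \<sigma> v" using \<psi>(1) by blast
      then have "\<not> v < n" using w(2) False by (auto simp: \<sigma>_def)
      then have "w = K + v" using v by (simp add: \<sigma>_def)
      then show ?thesis using h2(2)[OF v(1)] \<open>\<not> v < n\<close> by (simp add: e_def)
    qed
  qed
qed

lemma def_union:
  assumes "definable M B n X" "definable M B n Y"
  shows "definable M B n (X \<union> Y)"
proof -
  have lx: "X \<subseteq> {xs. length xs = n}" "Y \<subseteq> {xs. length xs = n}"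
    by (rule def_elim[OF assms(1)]; blast) (rule def_elim[OF assms(2)]; blast)
  have "X \<union> Y = {xs. length xs = n} - (({xs. length xs = n} - X) \<inter> ({xs. length xs = n} - Y))"
    using lx by blast
  then show ?thesis using assms by (simp add: def_compl def_inter)
qed




lemma def_len: "definable M B n X \<Longrightarrow> xs \<in> X \<Longrightarrow> length xs = n"
  by (rule def_elim) blast+

lemma card_suc_comb:
  "(\<exists>b. P b \<and> (\<exists>F. finite F \<and> card F = m \<and> (\<forall>a\<in>F. P a \<and> a \<noteq> b))) \<longleftrightarrow>
   (\<exists>F. finite F \<and> card F = Suc m \<and> (\<forall>a\<in>F. P a))"
proof
  assume "\<exists>b. P b \<and> (\<exists>F. finite F \<and> card F = m \<and> (\<forall>a\<in>F. P a \<and> a \<noteq> b))"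
  then obtain b F where h: "P b" "finite F" "card F = m" "\<forall>a\<in>F. P a \<and> a \<noteq> b" by blast
  then have "b \<notin> F" by blast
  then show "\<exists>F. finite F \<and> card F = Suc m \<and> (\<forall>a\<in>F. P a)"
    using h by (intro exI[of _ "insert b F"]) auto
next
  assume "\<exists>F. finite F \<and> card F = Suc m \<and> (\<forall>a\<in>F. P a)"
  then obtain F where h: "finite F" "card F = Suc m" "\<forall>a\<in>F. P a" by blast
  then obtain b where b: "b \<in> F" by (metis card.empty ex_in_conv nat.distinct(1))
  show "\<exists>b. P b \<and> (\<exists>F. finite F \<and> card F = m \<and> (\<forall>a\<in>F. P a \<and> a \<noteq> b))"
    using h b by (intro exI[of _ b] conjI exI[of _ "F - {b}"]) auto
qed

lemma cnt_ex:
  "\<exists>\<psi>. fv \<psi> \<subseteq> fv \<phi> - {x} \<and>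
     (\<forall>e. sat M \<psi> e = (\<exists>F. finite F \<and> card F = m \<and> (\<forall>a\<in>F. sat M \<phi> (e(x:=a)))))"
proof (induction m arbitrary: \<phi>)
  case 0
  show ?case by (rule exI[of _ tt]) auto
next
  case (Suc m)
  define z where "z = Suc (Max (insert x (fv \<phi>)))"
  have zf: "v < z" if "v \<in> insert x (fv \<phi>)" for v
  proof -
    have "v \<le> Max (insert x (fv \<phi>))" using that by (simp add: finite_fv)
    then show ?thesis by (simp add: z_def)
  qed
  have zx: "z \<noteq> x" and zphi: "z \<notin> fv \<phi>" using zf by auto
  define \<phi>' where "\<phi>' = Conj \<phi> (Neg (Eq (Var x) (Var z)))"
  obtain \<psi>' where \<psi>': "fv \<psi>' \<subseteq> fv \<phi>' - {x}"
    "\<And>e. sat M \<psi>' e = (\<exists>F. finite F \<and> card F = m \<and> (\<forall>a\<in>F. sat M \<phi>' (e(x:=a))))"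
    using Suc.IH[of \<phi>'] by blast
  obtain \<phi>z where \<phi>z: "fv \<phi>z \<subseteq> (id(x:=z)) ` fv \<phi>" "\<And>e. sat M \<phi>z e = sat M \<phi> (e \<circ> id(x:=z))"
    using subst_ex by blast
  define \<psi> where "\<psi> = Ex z (Conj \<phi>z \<psi>')"
  have "fv \<psi> \<subseteq> fv \<phi> - {x}"
  proof
    fix w assume w: "w \<in> fv \<psi>"
    then have wz: "w \<noteq> z" by (simp add: \<psi>_def)
    show "w \<in> fv \<phi> - {x}"
    proof (cases "w \<in> fv \<phi>z")
      case True
      then obtain v where "v \<in> fv \<phi>" "w = (id(x:=z)) v" using \<phi>z(1) by blast
      then show ?thesis using wz by (auto split: if_splits)
    next
      case False
      then have "w \<in> fv \<psi>'" using w by (simp add: \<psi>_def)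
      then show ?thesis using \<psi>'(1) wz by (auto simp: \<phi>'_def)
    qed
  qed
  moreover have "sat M \<psi> e = (\<exists>F. finite F \<and> card F = Suc m \<and> (\<forall>a\<in>F. sat M \<phi> (e(x:=a))))" for e
  proof -
    have co: "sat M \<phi> (e(z:=b, x:=c)) = sat M \<phi> (e(x:=c))" for b c
      by (rule sat_coinc) (use zphi in auto)
    have e1: "e(z:=b) \<circ> id(x:=z) = e(z:=b, x:=b)" for b
      using zx by (auto simp: fun_eq_iff)
    have "sat M \<psi> e = (\<exists>b. sat M \<phi> (e(x:=b)) \<and>
         (\<exists>F. finite F \<and> card F = m \<and> (\<forall>a\<in>F. sat M \<phi> (e(x:=a)) \<and> a \<noteq> b)))"
      using zx by (simp add: \<psi>_def \<phi>z(2) \<psi>'(2) e1 co \<phi>'_def)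
    also have "\<dots> = (\<exists>F. finite F \<and> card F = Suc m \<and> (\<forall>a\<in>F. sat M \<phi> (e(x:=a))))"
      by (rule card_suc_comb)
    finally show ?thesis .
  qed
  ultimately show ?case by blast
qed

lemma val_snoc: "length xs = n \<Longrightarrow> (val n xs e)(n := a) = val (Suc n) (xs @ [a]) e"
  by (auto simp: fun_eq_iff val_def nth_append)

lemma def_count:
  fixes M :: "('f,'r,'a) struct"
  assumes "definable M B (Suc n) X"
  shows "definable M B n {xs. length xs = n \<and> (\<exists>F. finite F \<and> card F = m \<and> (\<forall>y\<in>F. xs @ [y] \<in> X))}"
proof -
  obtain \<phi> e where h: "\<And>xs. length xs = Suc n \<Longrightarrow> xs \<in> X \<longleftrightarrow> sat M \<phi> (val (Suc n) xs e)"
    "\<And>w. w \<in> fv \<phi> \<Longrightarrow> Suc n \<le> w \<Longrightarrow> e w \<in> B"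
    by (rule def_elim[OF assms]) blast
  obtain \<psi> where \<psi>: "fv \<psi> \<subseteq> fv \<phi> - {n}"
    "\<And>e. sat M \<psi> e = (\<exists>F. finite F \<and> card F = m \<and> (\<forall>a\<in>F. sat M \<phi> (e(n:=a))))"
    using cnt_ex[of \<phi> n M m] by blast
  show ?thesis
  proof (rule def_intro[where \<phi> = \<psi> and e = e])
    fix xs :: "'a list" assume len: "length xs = n"
    show "xs \<in> {xs. length xs = n \<and> (\<exists>F. finite F \<and> card F = m \<and> (\<forall>y\<in>F. xs @ [y] \<in> X))} \<longleftrightarrow>
        sat M \<psi> (val n xs e)"
    proof -
      have pt: "sat M \<phi> ((val n xs e)(n:=a)) = (xs @ [a] \<in> X)" for a
        using h(1)[of "xs @ [a]"] len by (simp add: val_snoc)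
      show ?thesis using len by (simp only: \<psi>(2) pt mem_Collect_eq simp_thms)
    qed
  next
    fix w assume w: "w \<in> fv \<psi>" "n \<le> w"
    then have "w \<in> fv \<phi>" "w \<noteq> n" using \<psi>(1) by auto
    then show "e w \<in> B" using h(2) w(2) by simp
  qed auto
qed

lemma def_proj:
  fixes M :: "('f,'r,'a) struct"
  assumes "definable M B (Suc n) X"
  shows "definable M B n {xs. length xs = n \<and> (\<exists>y. xs @ [y] \<in> X)}"
proof -
  have "{xs. length xs = n \<and> (\<exists>y. xs @ [y] \<in> X)} =
        {xs. length xs = n \<and> (\<exists>F. finite F \<and> card F = 1 \<and> (\<forall>y\<in>F. xs @ [y] \<in> X))}"
    by (auto simp: card_Suc_eq)
  then show ?thesis using def_count[OF assms, of 1] by simp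
qed

lemma def_pre:
  fixes M :: "('f,'r,'a) struct"
  assumes "definable M B k X" "length ix = k" "\<forall>i\<in>set ix. i < n"
  shows "definable M B n {xs. length xs = n \<and> map ((!) xs) ix \<in> X}"
proof -
  obtain \<phi> e where h: "\<And>xs. length xs = k \<Longrightarrow> xs \<in> X \<longleftrightarrow> sat M \<phi> (val k xs e)"
    "\<And>w. w \<in> fv \<phi> \<Longrightarrow> k \<le> w \<Longrightarrow> e w \<in> B"
    by (rule def_elim[OF assms(1)]) blast
  define \<sigma> where "\<sigma> = (\<lambda>v. if v < k then ix ! v else n + v)"
  obtain \<psi> where \<psi>: "fv \<psi> \<subseteq> \<sigma> ` fv \<phi>" "\<And>e. sat M \<psi> e = sat M \<phi> (e \<circ> \<sigma>)"
    using subst_ex by blast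
  define e' where "e' = (\<lambda>w. e (w - n))"
  have ixn: "v < k \<Longrightarrow> ix ! v < n" for v using assms(2,3) by auto
  show ?thesis
  proof (rule def_intro[where \<phi> = \<psi> and e = e'])
    fix xs :: "'a list" assume len: "length xs = n"
    have "val n xs e' \<circ> \<sigma> = val k (map ((!) xs) ix) e"
      using ixn assms(2) by (auto simp: fun_eq_iff val_def \<sigma>_def e'_def)
    then show "xs \<in> {xs. length xs = n \<and> map ((!) xs) ix \<in> X} \<longleftrightarrow> sat M \<psi> (val n xs e')"
      using len assms(2) by (simp add: \<psi>(2) h(1))
  next
    fix w assume w: "w \<in> fv \<psi>" "n \<le> w"
    then obtain v where v: "v \<in> fv \<phi>" "w = \<sigma> v" using \<psi>(1) by blast
    have "\<not> v < k"
    proof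
      assume vk: "v < k"
      then have "w = ix ! v" using v(2) by (simp add: \<sigma>_def)
      then show False using ixn[OF vk] w(2) by simp
    qed
    then show "e' w \<in> B" using v h(2) by (simp add: \<sigma>_def e'_def)
  qed auto
qed

lemma def_fix:
  fixes M :: "('f,'r,'a) struct"
  assumes "definable M B (Suc n) X" "b \<in> B"
  shows "definable M B n {xs. length xs = n \<and> xs @ [b] \<in> X}"
proof -
  obtain \<phi> e where h: "\<And>xs. length xs = Suc n \<Longrightarrow> xs \<in> X \<longleftrightarrow> sat M \<phi> (val (Suc n) xs e)"
    "\<And>w. w \<in> fv \<phi> \<Longrightarrow> Suc n \<le> w \<Longrightarrow> e w \<in> B"
    by (rule def_elim[OF assms(1)]) blast
  define K where "K = Suc (Max (insert n (fv \<phi>)))"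
  have Kf: "v < K" if "v \<in> insert n (fv \<phi>)" for v
  proof -
    have "v \<le> Max (insert n (fv \<phi>))" using that by (simp add: finite_fv)
    then show ?thesis by (simp add: K_def)
  qed
  define \<sigma> where "\<sigma> = (\<lambda>v. if v = n then K else v)"
  obtain \<psi> where \<psi>: "fv \<psi> \<subseteq> \<sigma> ` fv \<phi>" "\<And>e. sat M \<psi> e = sat M \<phi> (e \<circ> \<sigma>)"
    using subst_ex by blast
  define e' where "e' = e(K := b)"
  have Kn: "n < K" using Kf by simp
  show ?thesis
  proof (rule def_intro[where \<phi> = \<psi> and e = e'])
    fix xs :: "'a list" assume len: "length xs = n"
    have "sat M \<phi> (val n xs e' \<circ> \<sigma>) = sat M \<phi> (val (Suc n) (xs @ [b]) e)"
    proof (rule sat_coinc, rule ballI)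
      fix v assume "v \<in> fv \<phi>"
      then have "v < K" using Kf by simp
      then show "(val n xs e' \<circ> \<sigma>) v = val (Suc n) (xs @ [b]) e v"
        using len Kn by (auto simp: val_def \<sigma>_def e'_def nth_append)
    qed
    then show "xs \<in> {xs. length xs = n \<and> xs @ [b] \<in> X} \<longleftrightarrow> sat M \<psi> (val n xs e')"
      using len by (simp add: \<psi>(2) h(1))
  next
    fix w assume w: "w \<in> fv \<psi>" "n \<le> w"
    then obtain v where v: "v \<in> fv \<phi>" "w = \<sigma> v" using \<psi>(1) by blast
    show "e' w \<in> B"
    proof (cases "v = n")
      case True then show ?thesis using v assms(2) by (simp add: \<sigma>_def e'_def)
    next
      case False
      then have "w = v" "v < K" using v Kf by (auto simp: \<sigma>_def)
      then show ?thesis using False w(2) h(2)[OF v(1)] by (simp add: e'_def)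
    qed
  qed auto
qed

lemma def_abs:
  fixes M :: "('f,'r,'a) struct"
  assumes "definable M (insert b B) n Y"
  shows "\<exists>Z. definable M B (Suc n) Z \<and> Y = {xs. length xs = n \<and> xs @ [b] \<in> Z}"
proof -
  obtain \<phi> e where h: "\<And>xs. length xs = n \<Longrightarrow> xs \<in> Y \<longleftrightarrow> sat M \<phi> (val n xs e)"
    "\<And>xs. xs \<in> Y \<Longrightarrow> length xs = n"
    "\<And>w. w \<in> fv \<phi> \<Longrightarrow> n \<le> w \<Longrightarrow> e w \<in> insert b B"
    by (rule def_elim[OF assms(1)]) blast
  define \<sigma> where "\<sigma> = (\<lambda>v. if v < n then v else if e v = b then n else Suc n + v)"
  obtain \<psi> where \<psi>: "fv \<psi> \<subseteq> \<sigma> ` fv \<phi>" "\<And>e. sat M \<psi> e = sat M \<phi> (e \<circ> \<sigma>)"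
    using subst_ex by blast
  define e' where "e' = (\<lambda>w. e (w - Suc n))"
  define Z where "Z = {zs. length zs = Suc n \<and> sat M \<psi> (val (Suc n) zs e')}"
  have "definable M B (Suc n) Z"
  proof (rule def_intro[where \<phi> = \<psi> and e = e'])
    fix w assume w: "w \<in> fv \<psi>" "Suc n \<le> w"
    then obtain v where v: "v \<in> fv \<phi>" "w = \<sigma> v" using \<psi>(1) by blast
    have vn: "\<not> v < n"
    proof
      assume "v < n" then have "w = v" using v(2) by (simp add: \<sigma>_def)
      then show False using w(2) \<open>v < n\<close> by simp
    qed
    have eb: "e v \<noteq> b"
    proof
      assume "e v = b" then have "w = n" using v(2) vn by (simp add: \<sigma>_def)
      then show False using w(2) by simp
    qed
    have "w = Suc n + v" using v(2) vn eb by (simp add: \<sigma>_def)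
    then have "e' w = e v" by (simp add: e'_def)
    then show "e' w \<in> B" using h(3)[OF v(1)] vn eb by simp
  qed (auto simp: Z_def)
  moreover have "Y = {xs. length xs = n \<and> xs @ [b] \<in> Z}"
  proof -
    have "val (Suc n) (xs @ [b]) e' \<circ> \<sigma> = val n xs e" if "length xs = n" for xs
      using that by (auto simp: fun_eq_iff val_def \<sigma>_def e'_def nth_append)
    then have "xs \<in> Y \<longleftrightarrow> length xs = n \<and> xs @ [b] \<in> Z" for xs
      using h(1)[of xs] h(2)[of xs] by (auto simp: Z_def \<psi>(2))
    then show ?thesis by blast
  qed
  ultimately show ?thesis by blast
qed

lemma def_eqc:
  fixes M :: "('f,'r,'a) struct"
  assumes "i < n" "b \<in> B"
  shows "definable M B n {xs. length xs = n \<and> xs ! i = b}"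
  by (rule def_intro[where \<phi> = "Eq (Var i) (Var n)" and e = "\<lambda>_. b"])
     (use assms in \<open>auto simp: val_def\<close>)

lemma def_empty: "definable M B n {}"
  using def_compl[OF def_univ[of M B n]] by simp




definition definable1 :: "('f, 'r, 'a) struct \<Rightarrow> 'a set \<Rightarrow> 'a set \<Rightarrow> bool" where
  "definable1 M B T \<longleftrightarrow> definable M B 1 ((\<lambda>b. [b]) ` T)"

lemma val1: "val 1 [b] e = e(0 := b)" "val (Suc 0) [b] e = e(0 := b)"
  by (auto simp: fun_eq_iff val_def)

lemma acl_iff: "a \<in> acl M B \<longleftrightarrow> (\<exists>T. definable1 M B T \<and> finite T \<and> a \<in> T)"
proof
  assume "a \<in> acl M B"
  then obtain \<phi> e where h: "params 1 \<phi> e \<subseteq> B" "finite {b. sat M \<phi> (e(0 := b))}" "sat M \<phi> (e(0 := a))"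
    unfolding acl_def by blast
  define T where "T = {b. sat M \<phi> (e(0 := b))}"
  have "(\<lambda>b. [b]) ` T = defset M 1 \<phi> e"
  proof (rule set_eqI)
    fix xs :: "'a list"
    show "xs \<in> (\<lambda>b. [b]) ` T \<longleftrightarrow> xs \<in> defset M 1 \<phi> e"
    proof
      assume "xs \<in> (\<lambda>b. [b]) ` T" then show "xs \<in> defset M 1 \<phi> e"
        by (auto simp: T_def defset_val val1)
    next
      assume "xs \<in> defset M 1 \<phi> e"
      then have "length xs = 1" "sat M \<phi> (val 1 xs e)" by (auto simp: defset_val)
      then obtain b where "xs = [b]" by (metis length_0_conv length_Suc_conv One_nat_def)
      then show "xs \<in> (\<lambda>b. [b]) ` T" using \<open>sat M \<phi> (val 1 xs e)\<close> by (auto simp: T_def val1)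
    qed
  qed
  then have "definable1 M B T" using h(1) unfolding definable1_def definable_def by blast
  then show "\<exists>T. definable1 M B T \<and> finite T \<and> a \<in> T" using h(2,3) by (auto simp: T_def)
next
  assume "\<exists>T. definable1 M B T \<and> finite T \<and> a \<in> T"
  then obtain T where T: "definable1 M B T" "finite T" "a \<in> T" by blast
  then obtain \<phi> e where h: "params 1 \<phi> e \<subseteq> B" "(\<lambda>b. [b]) ` T = defset M 1 \<phi> e"
    unfolding definable1_def definable_def by blast
  have eq: "sat M \<phi> (e(0 := b)) \<longleftrightarrow> b \<in> T" for b
  proof -
    have "[b] \<in> defset M 1 \<phi> e \<longleftrightarrow> sat M \<phi> (e(0 := b))" by (simp add: defset_val val1)
    moreover have "[b] \<in> (\<lambda>b. [b]) ` T \<longleftrightarrow> b \<in> T" by auto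
    ultimately show ?thesis using h(2) by simp
  qed
  have fe: "{b. sat M \<phi> (e(0:=b))} = T" using eq by auto
  show "a \<in> acl M B" unfolding acl_def mem_Collect_eq
    by (rule exI[of _ \<phi>], rule exI[of _ e]) (use h(1) T(2,3) eq fe in simp)
qed

definition ebs :: "'a list \<Rightarrow> 'a \<Rightarrow> nat \<Rightarrow> 'a" where
  "ebs bs d0 = (\<lambda>v. if 0 < v \<and> v \<le> length bs then bs ! (v - 1) else d0)"

lemma range_ebs: "finite (range (ebs bs d0))"
proof -
  have "range (ebs bs d0) \<subseteq> insert d0 (set bs)" by (auto simp: ebs_def)
  then show ?thesis by (rule finite_subset) simp
qed

lemma conv:
  fixes M :: "('f,'r,'a) struct"
  assumes "definable1 M B T" "B \<subseteq> set bs"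
  shows "\<exists>\<phi>. \<forall>b. sat M \<phi> ((ebs bs d0)(0 := b)) \<longleftrightarrow> b \<in> T"
proof -
  obtain \<phi>0 e0 where h: "\<And>xs. length xs = 1 \<Longrightarrow> xs \<in> (\<lambda>b. [b]) ` T \<longleftrightarrow> sat M \<phi>0 (val 1 xs e0)"
    "\<And>w. w \<in> fv \<phi>0 \<Longrightarrow> 1 \<le> w \<Longrightarrow> e0 w \<in> B"
    by (rule def_elim[OF assms(1)[unfolded definable1_def]]) blast
  define ix where "ix = (\<lambda>v. SOME j. j < length bs \<and> bs ! j = e0 v)"
  have ix: "ix v < length bs \<and> bs ! (ix v) = e0 v" if "v \<in> fv \<phi>0" "v \<noteq> 0" for v
  proof -
    have "e0 v \<in> set bs" using h(2)[OF that(1)] that(2) assms(2) by auto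
    then have "\<exists>j. j < length bs \<and> bs ! j = e0 v" by (simp add: in_set_conv_nth)
    then show ?thesis unfolding ix_def by (rule someI_ex)
  qed
  define \<sigma> where "\<sigma> = (\<lambda>v. if v = 0 then 0 else Suc (ix v))"
  obtain \<psi> where \<psi>: "\<And>e. sat M \<psi> e = sat M \<phi>0 (e \<circ> \<sigma>)"
    using subst_ex by blast
  have "sat M \<psi> ((ebs bs d0)(0 := b)) \<longleftrightarrow> b \<in> T" for b
  proof -
    have "sat M \<psi> ((ebs bs d0)(0 := b)) = sat M \<phi>0 (val 1 [b] e0)"
      unfolding \<psi>
    proof (rule sat_coinc, rule ballI)
      fix v assume v: "v \<in> fv \<phi>0"
      show "((ebs bs d0)(0 := b) \<circ> \<sigma>) v = val 1 [b] e0 v"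
      proof (cases "v = 0")
        case True then show ?thesis by (simp add: \<sigma>_def val_def)
      next
        case False then show ?thesis using ix[OF v False] by (simp add: \<sigma>_def val_def ebs_def)
      qed
    qed
    also have "\<dots> \<longleftrightarrow> [b] \<in> (\<lambda>b. [b]) ` T" using h(1)[of "[b]"] by simp
    also have "\<dots> \<longleftrightarrow> b \<in> T" by auto
    finally show ?thesis .
  qed
  then show ?thesis by blast
qed

lemma sat_type:
  fixes M :: "('f,'r,'a) struct" and T :: "'i \<Rightarrow> 'a set"
  assumes sat: "omega_saturated M" and fin: "finite B"
    and defs: "\<forall>i\<in>I. definable1 M B (T i)"
    and fip: "\<And>I0 F. I0 \<subseteq> I \<Longrightarrow> finite I0 \<Longrightarrow> finite F \<Longrightarrow> \<exists>b. b \<notin> F \<and> (\<forall>i\<in>I0. b \<in> T i)"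
  shows "\<exists>b. (\<forall>i\<in>I. b \<in> T i) \<and> b \<notin> acl M B"
proof -
  obtain bs where bs: "set bs = B" using finite_list[OF fin] by blast
  define E where "E = ebs bs (undefined :: 'a)"
  define \<Sigma>1 :: "('f,'r) fm set" where "\<Sigma>1 = {\<phi>. \<exists>i\<in>I. \<forall>b. sat M \<phi> (E(0:=b)) \<longleftrightarrow> b \<in> T i}"
  define \<Sigma>2 :: "('f,'r) fm set" where "\<Sigma>2 = {Neg \<psi> | \<psi>. finite {b. sat M \<psi> (E(0:=b))}}"
  have "\<exists>b. \<forall>\<phi>\<in>\<Sigma>1 \<union> \<Sigma>2. sat M \<phi> (E(0:=b))"
  proof (rule sat[unfolded omega_saturated_def, rule_format])
    show "finite (range E)" by (simp add: E_def range_ebs)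
  next
    fix \<Sigma>0 assume s0: "\<Sigma>0 \<subseteq> \<Sigma>1 \<union> \<Sigma>2" "finite \<Sigma>0"
    define ii where "ii = (\<lambda>\<phi>. SOME i. i \<in> I \<and> (\<forall>b. sat M \<phi> (E(0:=b)) \<longleftrightarrow> b \<in> T i))"
    have ii: "ii \<phi> \<in> I \<and> (\<forall>b. sat M \<phi> (E(0:=b)) \<longleftrightarrow> b \<in> T (ii \<phi>))" if "\<phi> \<in> \<Sigma>1" for \<phi>
    proof -
      from that obtain i where "i \<in> I \<and> (\<forall>b. sat M \<phi> (E(0:=b)) \<longleftrightarrow> b \<in> T i)"
        unfolding \<Sigma>1_def by blast
      then show ?thesis unfolding ii_def by (rule someI)
    qed
    define I0 where "I0 = ii ` (\<Sigma>0 \<inter> \<Sigma>1)"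
    define G where "G = {\<psi>. Neg \<psi> \<in> \<Sigma>0 \<and> finite {b. sat M \<psi> (E(0:=b))}}"
    define F where "F = (\<Union>\<psi>\<in>G. {b. sat M \<psi> (E(0:=b))})"
    have "finite G"
    proof -
      have "G \<subseteq> Neg -` \<Sigma>0" by (auto simp: G_def)
      moreover have "finite (Neg -` \<Sigma>0)" by (rule finite_vimageI[OF s0(2)]) (simp add: inj_def)
      ultimately show ?thesis by (rule finite_subset)
    qed
    then have fF: "finite F" unfolding F_def by (auto simp: G_def)
    have I0: "I0 \<subseteq> I" "finite I0" using ii s0(2) by (auto simp: I0_def)
    obtain b where b: "b \<notin> F" "\<forall>i\<in>I0. b \<in> T i" using fip[OF I0 fF] by blast
    show "\<exists>b. \<forall>\<phi>\<in>\<Sigma>0. sat M \<phi> (E(0:=b))"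
    proof (intro exI ballI)
      fix \<phi> assume \<phi>: "\<phi> \<in> \<Sigma>0"
      show "sat M \<phi> (E(0:=b))"
      proof (cases "\<phi> \<in> \<Sigma>1")
        case True
        then have "ii \<phi> \<in> I0" using \<phi> by (auto simp: I0_def)
        then show ?thesis using ii[OF True] b(2) by blast
      next
        case False
        then have "\<phi> \<in> \<Sigma>2" using \<phi> s0(1) by blast
        then obtain \<psi> where \<psi>: "\<phi> = Neg \<psi>" "finite {b. sat M \<psi> (E(0:=b))}" by (auto simp: \<Sigma>2_def)
        then have "\<psi> \<in> G" using \<phi> by (simp add: G_def)
        then show ?thesis using b(1) \<psi>(1) by (auto simp: F_def)
      qed
    qed
  qed
  then obtain b where b: "\<forall>\<phi>\<in>\<Sigma>1 \<union> \<Sigma>2. sat M \<phi> (E(0:=b))" by blast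
  have "b \<in> T i" if i: "i \<in> I" for i
  proof -
    have d: "definable1 M B (T i)" using defs i by blast
    obtain \<phi> where \<phi>: "\<forall>b. sat M \<phi> (E(0 := b)) \<longleftrightarrow> b \<in> T i"
      using conv[OF d, of bs undefined] bs unfolding E_def by auto
    then have "\<phi> \<in> \<Sigma>1" using i by (auto simp: \<Sigma>1_def)
    then show ?thesis using b \<phi> by blast
  qed
  moreover have "b \<notin> acl M B"
  proof
    assume "b \<in> acl M B"
    then obtain T' where T': "definable1 M B T'" "finite T'" "b \<in> T'" by (auto simp: acl_iff)
    obtain \<psi> where \<psi>: "\<forall>b. sat M \<psi> (E(0 := b)) \<longleftrightarrow> b \<in> T'"
      using conv[OF T'(1), of bs undefined] bs unfolding E_def by auto
    then have "{b. sat M \<psi> (E(0:=b))} = T'" by auto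
    then have "Neg \<psi> \<in> \<Sigma>2" using T'(2) by (auto simp: \<Sigma>2_def)
    then have "sat M (Neg \<psi>) (E(0:=b))" using b by blast
    then show False using \<psi> T'(3) by simp
  qed
  ultimately show ?thesis by blast
qed




abbreviation L1 :: "'a set \<Rightarrow> 'a list set" where "L1 T \<equiv> (\<lambda>b. [b]) ` T"

lemma L1_mem[simp]: "[x] \<in> L1 T \<longleftrightarrow> x \<in> T" by auto

lemma len1_conv: "length xs = Suc 0 \<longleftrightarrow> (\<exists>x. xs = [x])"
  by (auto simp: length_Suc_conv)

lemma len2_conv: "length xs = Suc (Suc 0) \<longleftrightarrow> (\<exists>x y. xs = [x, y])"
  by (auto simp: length_Suc_conv)

lemma def1_from:
  assumes "definable M B (Suc 0) S"
  shows "definable1 M B {b. [b] \<in> S}"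
proof -
  have eq: "L1 {b. [b] \<in> S} = S"
  proof
    show "S \<subseteq> L1 {b. [b] \<in> S}"
    proof
      fix xs assume "xs \<in> S"
      then have "length xs = Suc 0" using def_len[OF assms] by blast
      then obtain x where "xs = [x]" using len1_conv[of xs] by blast
      then show "xs \<in> L1 {b. [b] \<in> S}" using \<open>xs \<in> S\<close> by auto
    qed
  next
    show "L1 {b. [b] \<in> S} \<subseteq> S" by blast
  qed
  show ?thesis unfolding definable1_def One_nat_def eq by (rule assms)
qed

lemma def1_to: "definable1 M B T \<Longrightarrow> definable M B (Suc 0) (L1 T)"
  unfolding definable1_def One_nat_def .

lemma acl_mono: "B \<subseteq> B' \<Longrightarrow> acl M B \<subseteq> acl M B'"
proof
  fix a assume B: "B \<subseteq> B'" and a: "a \<in> acl M B"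
  then obtain T where T: "definable1 M B T" "finite T" "a \<in> T" unfolding acl_iff by blast
  then have "definable1 M B' T" using def_mono[OF _ B] unfolding definable1_def by blast
  then show "a \<in> acl M B'" using T(2,3) unfolding acl_iff by blast
qed

lemma acl_incl: "a \<in> B \<Longrightarrow> a \<in> acl M B"
proof -
  assume a: "a \<in> B"
  have "definable M B (Suc 0) {xs. length xs = Suc 0 \<and> xs ! 0 = a}" by (rule def_eqc) (use a in auto)
  moreover have "{xs. length xs = Suc 0 \<and> xs ! 0 = a} = L1 {a}" by (auto simp: len1_conv)
  ultimately have "definable1 M B {a}" by (simp add: definable1_def)
  then show ?thesis unfolding acl_iff by blast
qed

lemma acl_trans:
  fixes M :: "('f,'r,'a) struct"
  assumes a: "a \<in> acl M (insert b X)" and b: "b \<in> acl M X"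
  shows "a \<in> acl M X"
proof -
  obtain T1 where T1: "definable1 M (insert b X) T1" "finite T1" "a \<in> T1"
    using a unfolding acl_iff by blast
  obtain T2 where T2: "definable1 M X T2" "finite T2" "b \<in> T2"
    using b unfolding acl_iff by blast
  obtain Z where Z: "definable M X (Suc (Suc 0)) Z" "L1 T1 = {xs. length xs = Suc 0 \<and> xs @ [b] \<in> Z}"
    using def_abs[OF def1_to[OF T1(1)]] by blast
  have T1Z: "x \<in> T1 \<longleftrightarrow> [x, b] \<in> Z" for x
  proof -
    have "x \<in> T1 \<longleftrightarrow> [x] \<in> L1 T1" by simp
    also have "\<dots> \<longleftrightarrow> [x, b] \<in> Z" using Z(2) by simp
    finally show ?thesis .
  qed
  define N where "N = card T1"
  define Zs where "Zs = {xs. length xs = Suc (Suc 0) \<and> map ((!) xs) [1, 0] \<in> Z}"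
  have dZs: "definable M X (Suc (Suc 0)) Zs" unfolding Zs_def by (rule def_pre[OF Z(1)]) auto
  have Zs: "[u, y] \<in> Zs \<longleftrightarrow> [y, u] \<in> Z" for u y by (simp add: Zs_def)
  define Cnt where "Cnt = {xs. length xs = Suc 0 \<and> (\<exists>F. finite F \<and> card F = Suc N \<and> (\<forall>y\<in>F. xs @ [y] \<in> Zs))}"
  have dCnt: "definable M X (Suc 0) Cnt" unfolding Cnt_def by (rule def_count[OF dZs])
  define W where "W = {xs. length xs = Suc (Suc 0) \<and> map ((!) xs) [1] \<in> {xs. length xs = Suc 0} - Cnt}"
  have dW: "definable M X (Suc (Suc 0)) W" unfolding W_def by (rule def_pre[OF def_compl[OF dCnt]]) auto
  have W: "[x, u] \<in> W \<longleftrightarrow> \<not> (\<exists>F. finite F \<and> card F = Suc N \<and> (\<forall>y\<in>F. [y, u] \<in> Z))" for x u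
    by (simp add: W_def Cnt_def Zs)
  define V where "V = {xs. length xs = Suc (Suc 0) \<and> map ((!) xs) [1] \<in> L1 T2}"
  have dV: "definable M X (Suc (Suc 0)) V" unfolding V_def by (rule def_pre[OF def1_to[OF T2(1)]]) auto
  have V: "[x, u] \<in> V \<longleftrightarrow> u \<in> T2" for x u by (simp add: V_def)
  define R where "R = {xs. length xs = Suc 0 \<and> (\<exists>y. xs @ [y] \<in> Z \<inter> W \<inter> V)}"
  have dR: "definable M X (Suc 0) R" unfolding R_def
    by (rule def_proj) (intro def_inter Z(1) dW dV)
  define R' where "R' = {x. \<exists>u. [x, u] \<in> Z \<and> [x, u] \<in> W \<and> u \<in> T2}"
  have RR: "R = L1 R'" by (auto simp: R_def R'_def len1_conv V)
  have "definable1 M X R'" using dR RR by (simp add: definable1_def)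
  moreover have "a \<in> R'"
  proof -
    have "[a, b] \<in> Z" using T1(3) T1Z by simp
    moreover have "[a, b] \<in> W"
    proof -
      have "\<not> (\<exists>F. finite F \<and> card F = Suc N \<and> (\<forall>y\<in>F. [y, b] \<in> Z))"
      proof
        assume "\<exists>F. finite F \<and> card F = Suc N \<and> (\<forall>y\<in>F. [y, b] \<in> Z)"
        then obtain F where F: "finite F" "card F = Suc N" "\<forall>y\<in>F. [y, b] \<in> Z" by blast
        then have "F \<subseteq> T1" using T1Z by blast
        then have "card F \<le> N" unfolding N_def using T1(2) by (rule card_mono[rotated])
        then show False using F(2) by simp
      qed
      then show ?thesis using W by blast
    qed
    ultimately show ?thesis using T2(3) by (auto simp: R'_def)
  qed
  moreover have "finite R'"
  proof -
    have fin_u: "finite {x. [x, u] \<in> Z \<and> [x, u] \<in> W}" for u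
    proof (rule ccontr)
      assume inf: "infinite {x. [x, u] \<in> Z \<and> [x, u] \<in> W}"
      then obtain F where F: "F \<subseteq> {x. [x, u] \<in> Z \<and> [x, u] \<in> W}" "finite F" "card F = Suc N"
        using infinite_arbitrarily_large by blast
      then have "\<exists>F. finite F \<and> card F = Suc N \<and> (\<forall>y\<in>F. [y, u] \<in> Z)" by blast
      moreover obtain x where "x \<in> F" using F(3) by fastforce
      ultimately show False using F(1) W by blast
    qed
    have "R' \<subseteq> (\<Union>u\<in>T2. {x. [x, u] \<in> Z \<and> [x, u] \<in> W})" by (auto simp: R'_def)
    moreover have "finite (\<Union>u\<in>T2. {x. [x, u] \<in> Z \<and> [x, u] \<in> W})" using T2(2) fin_u by blast
    ultimately show ?thesis by (rule finite_subset)
  qed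
  ultimately show ?thesis unfolding acl_iff by blast
qed

lemma acl_trans_set:
  fixes M :: "('f,'r,'a) struct"
  assumes "finite Z" "Z \<subseteq> acl M X" "a \<in> acl M (X \<union> Z)"
  shows "a \<in> acl M X"
  using assms
proof (induction Z arbitrary: a rule: finite_induct)
  case empty then show ?case by simp
next
  case (insert z Z)
  have "a \<in> acl M (insert z (X \<union> Z))" using insert.prems by simp
  moreover have "z \<in> acl M (X \<union> Z)" using insert.prems acl_mono[of X "X \<union> Z" M] by blast
  ultimately have "a \<in> acl M (X \<union> Z)" by (rule acl_trans)
  then show ?case using insert.IH insert.prems by blast
qed




definition pw :: "('f, 'r, 'a) struct \<Rightarrow> 'a set \<Rightarrow> 'a list \<Rightarrow> bool" where
  "pw M B xs \<longleftrightarrow> (\<forall>i j. i < j \<longrightarrow> j < length xs \<longrightarrow>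
      xs ! i \<in> acl M B \<or> xs ! j \<in> acl M (insert (xs ! i) B))"

lemma dim_le_pw: "dim_le M B X 1 \<longleftrightarrow> (\<forall>xs\<in>X. pw M B xs)"
proof
  assume h: "dim_le M B X 1"
  show "\<forall>xs\<in>X. pw M B xs"
  proof (rule ballI, unfold pw_def, intro allI impI, rule ccontr)
    fix xs i j assume xs: "xs \<in> X" and ij: "i < j" "j < length xs"
      and n: "\<not> (xs ! i \<in> acl M B \<or> xs ! j \<in> acl M (insert (xs ! i) B))"
    have "indep_ge M B X 2"
      unfolding indep_ge_def
    proof (intro bexI[OF _ xs] exI[of _ "[i, j]"] conjI)
      show "\<forall>ja<2. xs ! ([i, j] ! ja) \<notin> acl M (B \<union> set (map ((!) xs) (take ja [i, j])))"
      proof (intro allI impI)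
        fix ja :: nat assume "ja < 2"
        then have "ja = 0 \<or> ja = 1" by auto
        then show "xs ! ([i, j] ! ja) \<notin> acl M (B \<union> set (map ((!) xs) (take ja [i, j])))"
          using n by (auto simp: insert_commute)
      qed
    qed (use ij in auto)
    then show False using h unfolding dim_le_def by fastforce
  qed
next
  assume h: "\<forall>xs\<in>X. pw M B xs"
  show "dim_le M B X 1" unfolding dim_le_def
  proof (intro allI impI, rule ccontr)
    fix d assume "indep_ge M B X d" "\<not> d \<le> 1"
    then obtain xs idx where xs: "xs \<in> X" "length idx = d" "sorted_wrt (<) idx"
      "\<forall>i\<in>set idx. i < length xs"
      "\<forall>j<d. xs ! (idx ! j) \<notin> acl M (B \<union> set (map ((!) xs) (take j idx)))"
      unfolding indep_ge_def by blast
    have d2: "1 < d" using \<open>\<not> d \<le> 1\<close> by simp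
    have lt: "idx ! 0 < idx ! 1" using sorted_wrt_nth_less[OF xs(3), of 0 1] d2 xs(2) by simp
    have l1: "idx ! 1 < length xs" using xs(2,4) d2 by auto
    have a0: "xs ! (idx ! 0) \<notin> acl M B" using xs(5)[rule_format, of 0] d2 by simp
    have t1: "take 1 idx = [idx ! 0]" using d2 xs(2) by (cases idx) auto
    have a1: "xs ! (idx ! 1) \<notin> acl M (insert (xs ! (idx ! 0)) B)"
      using xs(5)[rule_format, of 1] d2 t1 by simp
    show False using h xs(1) lt l1 a0 a1 unfolding pw_def by blast
  qed
qed

lemmas dim_le_pw1 = dim_le_pw[unfolded One_nat_def]

lemma pw_mono: "pw M B xs \<Longrightarrow> B \<subseteq> B' \<Longrightarrow> pw M B' xs"
proof -
  assume h: "pw M B xs" "B \<subseteq> B'"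
  have m1: "acl M B \<subseteq> acl M B'" using h(2) by (rule acl_mono)
  have m2: "acl M (insert a B) \<subseteq> acl M (insert a B')" for a using h(2) by (intro acl_mono) blast
  show ?thesis using h(1) m1 m2 unfolding pw_def by blast
qed

lemma pw_prefix: "pw M B (xs @ ys) \<Longrightarrow> pw M B xs"
  unfolding pw_def
proof (intro allI impI)
  fix i j assume h: "\<forall>i j. i < j \<longrightarrow> j < length (xs @ ys) \<longrightarrow>
      (xs @ ys) ! i \<in> acl M B \<or> (xs @ ys) ! j \<in> acl M (insert ((xs @ ys) ! i) B)"
    and ij: "i < j" "j < length xs"
  have "(xs @ ys) ! i = xs ! i" "(xs @ ys) ! j = xs ! j" using ij by (auto simp: nth_append)
  then show "xs ! i \<in> acl M B \<or> xs ! j \<in> acl M (insert (xs ! i) B)"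
    using h[rule_format, of i j] ij by simp
qed

lemma pw_from_gen:
  fixes M :: "('f,'r,'a) struct"
  assumes ex: "exchange M" and all: "\<forall>t<length z. z ! t \<in> acl M (insert y B)"
  shows "pw M B z"
  unfolding pw_def
proof (intro allI impI)
  fix i j assume ij: "i < j" "j < length z"
  show "z ! i \<in> acl M B \<or> z ! j \<in> acl M (insert (z ! i) B)"
  proof (cases "z ! i \<in> acl M B")
    case False
    have zi: "z ! i \<in> acl M (insert y B)" using all ij by simp
    have yB: "y \<notin> acl M B"
    proof
      assume "y \<in> acl M B" then have "z ! i \<in> acl M B" by (rule acl_trans[OF zi])
      then show False using False by simp
    qed
    have d: "z ! i \<in> acl M (insert y B) - acl M B" using zi False by blast
    have yi: "y \<in> acl M (insert (z ! i) B)"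
      using ex[unfolded exchange_def, rule_format, OF d] .
    have sub: "acl M (insert y B) \<subseteq> acl M (insert y (insert (z ! i) B))"
      by (rule acl_mono) blast
    have "z ! j \<in> acl M (insert y B)" using all ij by simp
    then have zj: "z ! j \<in> acl M (insert y (insert (z ! i) B))" using sub by blast
    have "z ! j \<in> acl M (insert (z ! i) B)" by (rule acl_trans[OF zj yi])
    then show ?thesis by simp
  qed simp
qed

fun padf :: "nat list \<Rightarrow> ('f,'r) fm" where
  "padf [] = tt"
| "padf (v # vs) = Conj (Eq (Var v) (Var v)) (padf vs)"

lemma sat_padf[simp]: "sat M (padf vs) e" by (induction vs) auto
lemma fv_padf[simp]: "fv (padf vs) = set vs" by (induction vs) auto

lemma def_exact:
  fixes M :: "('f,'r,'a) struct"
  assumes "definable M P k X" "finite P"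
  shows "\<exists>\<phi> e. params k \<phi> e = P \<and> X = defset M k \<phi> e"
proof -
  obtain \<phi>0 e0 where h: "\<And>xs. length xs = k \<Longrightarrow> xs \<in> X \<longleftrightarrow> sat M \<phi>0 (val k xs e0)"
    "\<And>xs. xs \<in> X \<Longrightarrow> length xs = k"
    "\<And>w. w \<in> fv \<phi>0 \<Longrightarrow> k \<le> w \<Longrightarrow> e0 w \<in> P"
    by (rule def_elim[OF assms(1)]) blast
  obtain ps where ps: "set ps = P" using finite_list[OF assms(2)] by blast
  define K where "K = Suc (Max (insert k (fv \<phi>0)))"
  have Kf: "v < K" if "v \<in> insert k (fv \<phi>0)" for v
  proof -
    have "v \<le> Max (insert k (fv \<phi>0))" using that by (simp add: finite_fv)
    then show ?thesis by (simp add: K_def)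
  qed
  define \<phi> where "\<phi> = Conj \<phi>0 (padf (map (\<lambda>j. K + j) [0..<length ps]))"
  define e where "e = (\<lambda>v. if v < K then e0 v else ps ! (v - K))"
  have "params k \<phi> e = P"
  proof
    show "params k \<phi> e \<subseteq> P"
    proof
      fix a assume "a \<in> params k \<phi> e"
      then obtain w where w0: "w \<in> fv \<phi> - {..<k}" "a = e w" unfolding params_def by blast
      then have w: "w \<in> fv \<phi>" "k \<le> w" "a = e w" by auto
      show "a \<in> P"
      proof (cases "w \<in> fv \<phi>0")
        case True then show ?thesis using Kf w h(3) by (simp add: e_def)
      next
        case False
        have "w \<in> set (map (\<lambda>j. K + j) [0..<length ps])" using w(1) False by (simp add: \<phi>_def)
        then have kw: "K \<le> w" "w < K + length ps" by auto
        then have "e w = ps ! (w - K)" by (simp add: e_def)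
        moreover have "ps ! (w - K) \<in> set ps" using kw by simp
        ultimately show ?thesis using w(3) ps by simp
      qed
    qed
  next
    show "P \<subseteq> params k \<phi> e"
    proof
      fix a assume "a \<in> P"
      then obtain j where j: "j < length ps" "ps ! j = a" using ps by (auto simp: in_set_conv_nth)
      have "K + j \<in> fv \<phi>" "k \<le> K + j" using j Kf[of k] by (auto simp: \<phi>_def)
      moreover have "e (K + j) = a" using j by (simp add: e_def)
      ultimately show "a \<in> params k \<phi> e" unfolding params_def by force
    qed
  qed
  moreover have "X = defset M k \<phi> e"
  proof -
    have "sat M \<phi>0 (val k xs e) = sat M \<phi>0 (val k xs e0)" for xs
    proof (rule sat_coinc, rule ballI)
      fix v assume "v \<in> fv \<phi>0"
      then have "v < K" using Kf by blast
      then show "val k xs e v = val k xs e0 v" by (simp add: val_def e_def)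
    qed
    then show ?thesis using h(1,2) by (auto simp: defset_val \<phi>_def)
  qed
  ultimately show ?thesis by blast
qed

lemma curve_intro:
  fixes M :: "('f,'r,'a) struct"
  assumes "definable M P k X" "finite P" "P \<subseteq> A" "\<forall>xs\<in>X. pw M P xs"
  shows "is_curve M A k X"
proof -
  obtain \<phi> e where h: "params k \<phi> e = P" "X = defset M k \<phi> e"
    using def_exact[OF assms(1,2)] by blast
  show ?thesis unfolding is_curve_def
    by (rule exI[of _ \<phi>], rule exI[of _ e]) (use h assms(3,4) in \<open>simp add: dim_le_pw dim_le_pw1\<close>)
qed

lemma curve_elim:
  fixes M :: "('f,'r,'a) struct"
  assumes "is_curve M A k X"
  obtains P where "definable M P k X" "finite P" "P \<subseteq> A" "\<forall>xs\<in>X. pw M P xs"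
proof -
  obtain \<phi> e where h: "params k \<phi> e \<subseteq> A" "X = defset M k \<phi> e" "dim_le M (params k \<phi> e) X 1"
    using assms unfolding is_curve_def by blast
  have "definable M (params k \<phi> e) k X" unfolding definable_def using h(2) by blast
  moreover have "finite (params k \<phi> e)" by (simp add: params_def finite_fv)
  ultimately show ?thesis using that h(1,3) by (simp add: dim_le_pw dim_le_pw1)
qed

lemma cyl_intro:
  assumes "sorted_wrt (<) ix" "\<forall>i\<in>set ix. i < n" "is_curve M A (length ix) C"
  shows "cylinder M A n {xs. length xs = n \<and> map ((!) xs) ix \<in> C}"
  unfolding cylinder_def using assms by blast

lemma def_eqv:
  fixes M :: "('f,'r,'a) struct"
  assumes "i < n" "j < n"
  shows "definable M B n {xs. length xs = n \<and> xs ! i = xs ! j}"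
  by (rule def_intro[where \<phi> = "Eq (Var i) (Var j)" and e = undefined])
     (use assms in \<open>auto simp: val_def\<close>)

lemma def_proj_many:
  fixes M :: "('f,'r,'a) struct"
  shows "definable M B (m + k) X \<Longrightarrow> definable M B m {xs. length xs = m \<and> (\<exists>zs. length zs = k \<and> xs @ zs \<in> X)}"
proof (induction k arbitrary: X)
  case 0
  have "{xs. length xs = m \<and> (\<exists>zs. length zs = 0 \<and> xs @ zs \<in> X)} = X"
    using def_len[OF 0[simplified]] by auto
  then show ?case using 0 by simp
next
  case (Suc k)
  define X' where "X' = {xs. length xs = m + k \<and> (\<exists>y. xs @ [y] \<in> X)}"
  have "definable M B (m + k) X'" unfolding X'_def by (rule def_proj) (use Suc.prems in simp)
  then have d: "definable M B m {xs. length xs = m \<and> (\<exists>zs. length zs = k \<and> xs @ zs \<in> X')}"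
    by (rule Suc.IH)
  have "{xs. length xs = m \<and> (\<exists>zs. length zs = k \<and> xs @ zs \<in> X')} =
        {xs. length xs = m \<and> (\<exists>zs. length zs = Suc k \<and> xs @ zs \<in> X)}"
  proof (rule set_eqI, rule iffI)
    fix xs assume "xs \<in> {xs. length xs = m \<and> (\<exists>zs. length zs = k \<and> xs @ zs \<in> X')}"
    then obtain zs y where "length xs = m" "length zs = k" "(xs @ zs) @ [y] \<in> X" by (auto simp: X'_def)
    then show "xs \<in> {xs. length xs = m \<and> (\<exists>zs. length zs = Suc k \<and> xs @ zs \<in> X)}"
      by (intro CollectI conjI exI[of _ "zs @ [y]"]) auto
  next
    fix xs assume "xs \<in> {xs. length xs = m \<and> (\<exists>zs. length zs = Suc k \<and> xs @ zs \<in> X)}"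
    then obtain zs where z: "length xs = m" "length zs = Suc k" "xs @ zs \<in> X" by blast
    then obtain zs' y where "zs = zs' @ [y]" by (metis append_butlast_last_id list.size(3) nat.distinct(1))
    then show "xs \<in> {xs. length xs = m \<and> (\<exists>zs. length zs = k \<and> xs @ zs \<in> X')}"
      using z by (intro CollectI conjI exI[of _ zs']) (auto simp: X'_def)
  qed
  then show ?case using d by simp
qed

lemma def_Inter:
  fixes M :: "('f,'r,'a) struct"
  assumes "finite I" "\<forall>i\<in>I. definable M B n (X i)"
  shows "definable M B n ({xs. length xs = n} \<inter> \<Inter> (X ` I))"
  using assms
proof (induction I rule: finite_induct)
  case empty then show ?case by (simp add: def_univ)
next
  case (insert i I)
  have eq: "{xs. length xs = n} \<inter> \<Inter> (X ` insert i I) = X i \<inter> ({xs. length xs = n} \<inter> \<Inter> (X ` I))" by auto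
  have a: "definable M B n (X i)" using insert.prems by simp
  have b: "definable M B n ({xs. length xs = n} \<inter> \<Inter> (X ` I))" using insert.IH insert.prems by simp
  show ?case unfolding eq by (rule def_inter[OF a b])
qed

lemma def_Union:
  fixes M :: "('f,'r,'a) struct"
  assumes "finite I" "\<forall>i\<in>I. definable M B n (X i)"
  shows "definable M B n (\<Union> (X ` I))"
  using assms
proof (induction I rule: finite_induct)
  case empty then show ?case by (simp add: def_empty)
next
  case (insert i I)
  have a: "definable M B n (X i)" using insert.prems by simp
  have b: "definable M B n (\<Union> (X ` I))" using insert.IH insert.prems by simp
  show ?case using def_union[OF a b] by simp
qed

lemma bc_Inter:
  assumes "finite I" "\<forall>i\<in>I. boolcomb U S (X i)" "boolcomb U S U"
  shows "boolcomb U S (U \<inter> \<Inter> (X ` I))"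
  using assms
proof (induction I rule: finite_induct)
  case empty then show ?case by simp
next
  case (insert i I)
  have eq: "U \<inter> \<Inter> (X ` insert i I) = X i \<inter> (U \<inter> \<Inter> (X ` I))" by auto
  have a: "boolcomb U S (X i)" using insert.prems by simp
  have b: "boolcomb U S (U \<inter> \<Inter> (X ` I))" using insert.IH insert.prems by simp
  show ?case unfolding eq by (rule boolcomb.inter[OF a b])
qed

lemma bc_Union:
  assumes "finite I" "\<forall>i\<in>I. boolcomb U S (X i)" "boolcomb U S U"
  shows "boolcomb U S (\<Union> (X ` I))"
  using assms
proof (induction I rule: finite_induct)
  case empty
  have "boolcomb U S (U - U)" using empty(2) by (rule boolcomb.compl)
  then show ?case by simp
next
  case (insert i I)
  have a: "boolcomb U S (X i)" using insert.prems by simp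
  have b: "boolcomb U S (\<Union> (X ` I))" using insert.IH insert.prems by simp
  show ?case using boolcomb.union[OF a b] by simp
qed




locale L37 =
  fixes M :: "('f,'r,'a) struct" and n r :: nat and idx :: "nat \<Rightarrow> nat list" and C :: "nat \<Rightarrow> 'a list set"
  assumes geo: "geometric M" and osat: "omega_saturated M"
    and cur: "\<forall>i<r. sorted_wrt (<) (idx i) \<and> (\<forall>j\<in>set (idx i). j < n) \<and>
              is_curve M (acl M {}) (length (idx i) + 1) (C i)"
begin

abbreviation k :: "nat \<Rightarrow> nat" where "k i \<equiv> length (idx i)"

lemma exch: "exchange M" using geo by (simp add: geometric_def)

definition p :: "nat \<Rightarrow> 'a set" where
  "p i = (SOME P. definable M P (Suc (k i)) (C i) \<and> finite P \<and> P \<subseteq> acl M {} \<and> (\<forall>xs\<in>C i. pw M P xs))"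

lemma p_props:
  assumes "i < r"
  shows "definable M (p i) (Suc (k i)) (C i) \<and> finite (p i) \<and> p i \<subseteq> acl M {} \<and> (\<forall>xs\<in>C i. pw M (p i) xs)"
proof -
  have c: "is_curve M (acl M {}) (Suc (k i)) (C i)" using cur assms by simp
  obtain P where "definable M P (Suc (k i)) (C i)" "finite P" "P \<subseteq> acl M {}" "\<forall>xs\<in>C i. pw M P xs"
    by (rule curve_elim[OF c]) blast
  then have "\<exists>P. definable M P (Suc (k i)) (C i) \<and> finite P \<and> P \<subseteq> acl M {} \<and> (\<forall>xs\<in>C i. pw M P xs)" by blast
  then show ?thesis unfolding p_def by (rule someI_ex)
qed

definition P0 :: "'a set" where "P0 = \<Union> (p ` {..<r})"

lemma P0_fin: "finite P0"
proof -
  have "\<forall>i\<in>{..<r}. finite (p i)" using p_props by blast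
  then show ?thesis unfolding P0_def by blast
qed

lemma P0_acl: "P0 \<subseteq> acl M {}"
proof -
  have "\<forall>i\<in>{..<r}. p i \<subseteq> acl M {}" using p_props by blast
  then show ?thesis unfolding P0_def by blast
qed

lemma p_P0: "i < r \<Longrightarrow> p i \<subseteq> P0" unfolding P0_def by blast

lemma C_def0: "i < r \<Longrightarrow> definable M P0 (Suc (k i)) (C i)"
proof -
  assume i: "i < r"
  have "definable M (p i) (Suc (k i)) (C i)" using p_props[OF i] by blast
  then show ?thesis by (rule def_mono) (rule p_P0[OF i])
qed

lemma C_pw: "i < r \<Longrightarrow> xs \<in> C i \<Longrightarrow> pw M P0 xs"
proof -
  assume i: "i < r" and xs: "xs \<in> C i"
  have "pw M (p i) xs" using p_props[OF i] xs by blast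
  then show ?thesis by (rule pw_mono) (rule p_P0[OF i])
qed

lemma C_len: "i < r \<Longrightarrow> xs \<in> C i \<Longrightarrow> length xs = Suc (k i)"
  by (rule def_len[OF C_def0])

lemma acl_P0: "acl M P0 \<subseteq> acl M {}"
proof
  fix a assume "a \<in> acl M P0"
  then have "a \<in> acl M ({} \<union> P0)" by simp
  then show "a \<in> acl M {}" using acl_trans_set[OF P0_fin P0_acl] by blast
qed

definition Z :: "nat \<Rightarrow> nat \<Rightarrow> 'a list set" where
  "Z i j = {w. length w = Suc (Suc 0) \<and> (\<exists>a. length a = k i \<and> a @ [w ! 1] \<in> C i \<and> a ! j = w ! 0)}"

lemma map_drop2:
  assumes "length xs = Suc (Suc 0)" "length zs = m"
  shows "map ((!) (xs @ zs)) (map (\<lambda>t. Suc (Suc t)) [0..<m] @ [1]) = zs @ [xs ! 1]"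
proof (rule nth_equalityI)
  show "length (map ((!) (xs @ zs)) (map (\<lambda>t. Suc (Suc t)) [0..<m] @ [1])) = length (zs @ [xs ! 1])"
    using assms by simp
next
  fix t assume "t < length (map ((!) (xs @ zs)) (map (\<lambda>t. Suc (Suc t)) [0..<m] @ [1]))"
  then have t: "t < Suc m" by simp
  show "map ((!) (xs @ zs)) (map (\<lambda>t. Suc (Suc t)) [0..<m] @ [1]) ! t = (zs @ [xs ! 1]) ! t"
  proof (cases "t < m")
    case True then show ?thesis using assms by (simp add: nth_append)
  next
    case False then have "t = m" using t by simp
    then show ?thesis using assms by (simp add: nth_append)
  qed
qed

lemma Z_def0:
  assumes i: "i < r" and j: "j < k i"
  shows "definable M P0 (Suc (Suc 0)) (Z i j)"
proof -
  define Q where "Q = {w. length w = Suc (Suc 0) + k i \<and> map ((!) w) (map (\<lambda>t. Suc (Suc t)) [0..<k i] @ [1]) \<in> C i}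
     \<inter> {w. length w = Suc (Suc 0) + k i \<and> w ! 0 = w ! (Suc (Suc j))}"
  have dQ: "definable M P0 (Suc (Suc 0) + k i) Q" unfolding Q_def
  proof (rule def_inter)
    show "definable M P0 (Suc (Suc 0) + k i)
       {w. length w = Suc (Suc 0) + k i \<and> map ((!) w) (map (\<lambda>t. Suc (Suc t)) [0..<k i] @ [1]) \<in> C i}"
      by (rule def_pre[OF C_def0[OF i]]) auto
    show "definable M P0 (Suc (Suc 0) + k i) {w. length w = Suc (Suc 0) + k i \<and> w ! 0 = w ! Suc (Suc j)}"
      by (rule def_eqv) (use j in simp_all)
  qed
  have "Z i j = {xs. length xs = Suc (Suc 0) \<and> (\<exists>zs. length zs = k i \<and> xs @ zs \<in> Q)}"
  proof (rule set_eqI, rule iffI)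
    fix w assume "w \<in> Z i j"
    then obtain a where a: "length w = Suc (Suc 0)" "length a = k i" "a @ [w ! 1] \<in> C i" "a ! j = w ! 0"
      by (auto simp: Z_def)
    have "w @ a \<in> Q" using a j map_drop2[OF a(1,2)] by (auto simp: Q_def nth_append)
    then show "w \<in> {xs. length xs = Suc (Suc 0) \<and> (\<exists>zs. length zs = k i \<and> xs @ zs \<in> Q)}" using a by blast
  next
    fix w assume "w \<in> {xs. length xs = Suc (Suc 0) \<and> (\<exists>zs. length zs = k i \<and> xs @ zs \<in> Q)}"
    then obtain a where a: "length w = Suc (Suc 0)" "length a = k i" "w @ a \<in> Q" by blast
    then have "a @ [w ! 1] \<in> C i" "a ! j = w ! 0" using map_drop2[OF a(1,2)] j by (auto simp: Q_def nth_append)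
    then show "w \<in> Z i j" using a by (auto simp: Z_def)
  qed
  then show ?thesis using def_proj_many[OF dQ] by simp
qed

definition proj :: "nat \<Rightarrow> nat \<Rightarrow> 'a \<Rightarrow> 'a set" where
  "proj i j y = {c. \<exists>a. length a = k i \<and> a @ [y] \<in> C i \<and> a ! j = c}"

lemma proj_Z: "c \<in> proj i j y \<longleftrightarrow> [c, y] \<in> Z i j"
  by (simp add: proj_def Z_def)

lemma proj_def1:
  assumes i: "i < r" and j: "j < k i"
  shows "definable1 M (insert y P0) (proj i j y)"
proof -
  have "definable M (insert y P0) (Suc (Suc 0)) (Z i j)" using Z_def0[OF i j] def_mono by blast
  then have "definable M (insert y P0) (Suc 0) {xs. length xs = Suc 0 \<and> xs @ [y] \<in> Z i j}"
    by (rule def_fix) simp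
  then have "definable1 M (insert y P0) {c. [c] \<in> {xs. length xs = Suc 0 \<and> xs @ [y] \<in> Z i j}}"
    by (rule def1_from)
  moreover have "{c. [c] \<in> {xs. length xs = Suc 0 \<and> xs @ [y] \<in> Z i j}} = proj i j y"
    by (auto simp: proj_Z)
  ultimately show ?thesis by simp
qed

lemma fiber_alg:
  assumes "i < r" "j < k i" "finite (proj i j y)" "c \<in> proj i j y"
  shows "c \<in> acl M (insert y P0)"
  unfolding acl_iff using proj_def1[OF assms(1,2)] assms(3,4) by blast


lemma inf_proj_alg:
  assumes i: "i < r" and j: "j < k i" and inf: "infinite (proj i j y)"
  shows "y \<in> acl M P0"
proof (rule ccontr)
  assume ny: "y \<notin> acl M P0"
  have "\<exists>c. (\<forall>u\<in>{0::nat}. c \<in> proj i j y) \<and> c \<notin> acl M (insert y P0)"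
  proof (rule sat_type[OF osat])
    show "finite (insert y P0)" using P0_fin by simp
    show "\<forall>u\<in>{0::nat}. definable1 M (insert y P0) (proj i j y)" using proj_def1[OF i j] by simp
  next
    fix I0 :: "nat set" and F :: "'a set" assume "finite F"
    then have "infinite (proj i j y - F)" using inf by simp
    then obtain c where "c \<in> proj i j y - F" by (metis finite.emptyI ex_in_conv)
    then show "\<exists>b. b \<notin> F \<and> (\<forall>u\<in>I0. b \<in> proj i j y)" by blast
  qed
  then obtain c where c: "c \<in> proj i j y" "c \<notin> acl M (insert y P0)" by blast
  then obtain a where a: "length a = k i" "a @ [y] \<in> C i" "a ! j = c" by (auto simp: proj_def)
  have "pw M P0 (a @ [y])" by (rule C_pw[OF i a(2)])
  then have "(a @ [y]) ! j \<in> acl M P0 \<or> (a @ [y]) ! (k i) \<in> acl M (insert ((a @ [y]) ! j) P0)"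
    unfolding pw_def using j a(1) by simp
  moreover have "(a @ [y]) ! j = c" "(a @ [y]) ! (k i) = y" using a j by (auto simp: nth_append)
  ultimately have h: "c \<in> acl M P0 \<or> y \<in> acl M (insert c P0)" by simp
  have "acl M P0 \<subseteq> acl M (insert y P0)" by (rule acl_mono) blast
  then have "c \<notin> acl M P0" using c(2) by blast
  then have "y \<in> acl M (insert c P0) - acl M P0" using h ny by blast
  then have "c \<in> acl M (insert y P0)" using exch unfolding exchange_def by blast
  then show False using c(2) by simp
qed

lemma Aij_finite:
  assumes i: "i < r" and j: "j < k i"
  shows "finite {y. infinite (proj i j y)}"
proof (rule ccontr)
  assume inf: "infinite {y. infinite (proj i j y)}"
  define Zs where "Zs = {w. length w = Suc (Suc 0) \<and> map ((!) w) [1, 0] \<in> Z i j}"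
  have dZs: "definable M P0 (Suc (Suc 0)) Zs" unfolding Zs_def by (rule def_pre[OF Z_def0[OF i j]]) auto
  define Cn where "Cn = (\<lambda>N. {xs. length xs = Suc 0 \<and> (\<exists>F. finite F \<and> card F = N \<and> (\<forall>c\<in>F. xs @ [c] \<in> Zs))})"
  have dCn: "definable M P0 (Suc 0) (Cn N)" for N unfolding Cn_def by (rule def_count[OF dZs])
  define T where "T = (\<lambda>N. {y. [y] \<in> Cn N})"
  have dT: "definable1 M P0 (T N)" for N unfolding T_def by (rule def1_from[OF dCn])
  have T: "y \<in> T N \<longleftrightarrow> (\<exists>F. finite F \<and> card F = N \<and> F \<subseteq> proj i j y)" for y N
  proof -
    have "[y, c] \<in> Zs \<longleftrightarrow> c \<in> proj i j y" for c by (simp add: Zs_def proj_Z)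
    then show ?thesis by (simp add: T_def Cn_def subset_iff Ball_def)
  qed
  have "\<exists>y. (\<forall>N\<in>(UNIV::nat set). y \<in> T N) \<and> y \<notin> acl M P0"
  proof (rule sat_type[OF osat P0_fin])
    show "\<forall>N\<in>UNIV. definable1 M P0 (T N)" using dT by blast
  next
    fix I0 :: "nat set" and F :: "'a set" assume "finite F"
    then have "infinite ({y. infinite (proj i j y)} - F)" using inf by simp
    then obtain y where y: "y \<in> {y. infinite (proj i j y)} - F" by (metis finite.emptyI ex_in_conv)
    have "y \<in> T N" for N
    proof -
      obtain F' where "F' \<subseteq> proj i j y" "finite F'" "card F' = N"
        using y infinite_arbitrarily_large by blast
      then show ?thesis using T by blast
    qed
    then show "\<exists>b. b \<notin> F \<and> (\<forall>N\<in>I0. b \<in> T N)" using y by blast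
  qed
  then obtain y where y: "\<forall>N. y \<in> T N" "y \<notin> acl M P0" by blast
  have "infinite (proj i j y)"
  proof
    assume f: "finite (proj i j y)"
    obtain F where F: "finite F" "card F = Suc (card (proj i j y))" "F \<subseteq> proj i j y"
      using y(1) T by blast
    have "card F \<le> card (proj i j y)" using card_mono[OF f F(3)] .
    then show False using F(2) by simp
  qed
  then show False using inf_proj_alg[OF i j] y(2) by blast
qed

definition fib :: "nat \<Rightarrow> 'a \<Rightarrow> 'a list set" where
  "fib i y = {a. a @ [y] \<in> C i}"

lemma fib_fin:
  assumes i: "i < r" and fp: "\<forall>j<k i. finite (proj i j y)"
  shows "finite (fib i y)"
proof -
  define U where "U = (\<Union>j\<in>{..<k i}. proj i j y)"
  have fU: "finite U" using fp by (auto simp: U_def)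
  have "fib i y \<subseteq> {xs. set xs \<subseteq> U \<and> length xs \<le> k i}"
  proof
    fix a assume "a \<in> fib i y"
    then have a: "a @ [y] \<in> C i" by (simp add: fib_def)
    then have la: "length a = k i" using C_len[OF i a] by simp
    have "set a \<subseteq> U"
    proof
      fix c assume "c \<in> set a"
      then obtain j where "j < length a" "a ! j = c" by (auto simp: in_set_conv_nth)
      then have "c \<in> proj i j y" "j < k i" using a la by (auto simp: proj_def)
      then show "c \<in> U" by (auto simp: U_def)
    qed
    then show "a \<in> {xs. set xs \<subseteq> U \<and> length xs \<le> k i}" using la by simp
  qed
  moreover have "finite {xs. set xs \<subseteq> U \<and> length xs \<le> k i}" by (rule finite_lists_length_le[OF fU])
  ultimately show ?thesis by (rule finite_subset)
qed

definition A :: "'a set" where "A = (\<Union>i\<in>{..<r}. {y. infinite (fib i y)})"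

lemma A_sub: "A \<subseteq> (\<Union>i\<in>{..<r}. \<Union>j\<in>{..<k i}. {y. infinite (proj i j y)})"
proof
  fix y assume "y \<in> A"
  then obtain i where i: "i < r" "infinite (fib i y)" by (auto simp: A_def)
  then obtain j where "j < k i" "infinite (proj i j y)" using fib_fin by blast
  then show "y \<in> (\<Union>i\<in>{..<r}. \<Union>j\<in>{..<k i}. {y. infinite (proj i j y)})" using i by blast
qed

lemma A_fin: "finite A"
proof -
  have "finite (\<Union>i\<in>{..<r}. \<Union>j\<in>{..<k i}. {y. infinite (proj i j y)})"
    using Aij_finite by auto
  then show ?thesis using A_sub finite_subset by blast
qed

lemma A_acl: "A \<subseteq> acl M {}"
proof -
  have "(\<Union>i\<in>{..<r}. \<Union>j\<in>{..<k i}. {y. infinite (proj i j y)}) \<subseteq> acl M P0"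
  proof
    fix y assume "y \<in> (\<Union>i\<in>{..<r}. \<Union>j\<in>{..<k i}. {y. infinite (proj i j y)})"
    then obtain i j where "i < r" "j < k i" "infinite (proj i j y)" by blast
    then show "y \<in> acl M P0" by (rule inf_proj_alg)
  qed
  then have "A \<subseteq> acl M P0" using A_sub by (rule subset_trans[rotated])
  then show ?thesis using acl_P0 by (rule subset_trans)
qed

lemma notA_alg:
  assumes i: "i < r" and y: "y \<notin> A" and a: "a @ [y] \<in> C i" and j: "j < k i"
  shows "a ! j \<in> acl M (insert y P0)"
proof -
  have ff: "finite (fib i y)" using y i by (auto simp: A_def)
  have "proj i j y \<subseteq> (\<lambda>a. a ! j) ` fib i y" by (auto simp: proj_def fib_def)
  then have "finite (proj i j y)" using ff finite_surj by blast
  moreover have "a ! j \<in> proj i j y" using a C_len[OF i a] by (auto simp: proj_def)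
  ultimately show ?thesis by (rule fiber_alg[OF i j])
qed

end




context L37 begin

abbreviation U :: "'a list set" where "U \<equiv> {xs. length xs = n}"
abbreviation Cyl :: "'a list set set" where "Cyl \<equiv> {Y. cylinder M (acl M {}) n Y}"

lemma BC_U: "boolcomb U Cyl U"
proof -
  have "{xs. length xs = (0::nat)} = {[]}" by auto
  then have d: "definable M {} 0 {[]}" using def_univ[of M "{}" 0] by simp
  have "is_curve M (acl M {}) 0 {[]}"
    by (rule curve_intro[OF d]) (auto simp: pw_def)
  then have "cylinder M (acl M {}) n {xs. length xs = n \<and> map ((!) xs) [] \<in> {[]}}"
    using cyl_intro[of "[]" n M "acl M {}" "{[]}"] by simp
  moreover have "{xs. length xs = n \<and> map ((!) xs) [] \<in> {[]}} = U" by auto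
  ultimately show ?thesis by (intro boolcomb.gen) simp
qed

definition H :: "nat \<Rightarrow> 'a \<Rightarrow> 'a list set" where
  "H i y = {x. length x = n \<and> map ((!) x) (idx i) @ [y] \<in> C i}"

lemma H_cyl:
  assumes i: "i < r" and y: "y \<in> A"
  shows "cylinder M (acl M {}) n (H i y)"
proof -
  define fb where "fb = {a. length a = k i \<and> a @ [y] \<in> C i}"
  have "definable M (insert y P0) (Suc (k i)) (C i)" using C_def0[OF i] def_mono by blast
  then have d: "definable M (insert y P0) (k i) fb" unfolding fb_def by (rule def_fix) simp
  have c: "is_curve M (acl M {}) (k i) fb"
  proof (rule curve_intro[OF d])
    show "finite (insert y P0)" using P0_fin by simp
    show "insert y P0 \<subseteq> acl M {}" using P0_acl A_acl y by blast
    show "\<forall>xs\<in>fb. pw M (insert y P0) xs"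
    proof
      fix a assume "a \<in> fb"
      then have "a @ [y] \<in> C i" by (simp add: fb_def)
      then have "pw M P0 (a @ [y])" by (rule C_pw[OF i])
      then have "pw M (insert y P0) (a @ [y])" by (rule pw_mono) blast
      then show "pw M (insert y P0) a" by (rule pw_prefix)
    qed
  qed
  have "H i y = {x. length x = n \<and> map ((!) x) (idx i) \<in> fb}" by (auto simp: H_def fb_def)
  moreover have "cylinder M (acl M {}) n {x. length x = n \<and> map ((!) x) (idx i) \<in> fb}"
    by (rule cyl_intro) (use cur i c in auto)
  ultimately show ?thesis by simp
qed

definition jl :: "nat list" where "jl = sorted_list_of_set (\<Union>i\<in>{..<r}. set (idx i))"

lemma jl_set: "set jl = (\<Union>i\<in>{..<r}. set (idx i))"
  unfolding jl_def by (rule set_sorted_list_of_set) simp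

lemma jl_sorted: "sorted_wrt (<) jl"
  unfolding jl_def strict_sorted_iff by simp

lemma jl_distinct: "distinct jl" using jl_sorted strict_sorted_iff by blast

lemma jl_lt: "\<forall>t\<in>set jl. t < n" using cur jl_set by auto

definition ps :: "nat \<Rightarrow> nat" where "ps v = (LEAST t. jl ! t = v)"

lemma ps_ok:
  assumes "v \<in> set jl"
  shows "ps v < length jl \<and> jl ! ps v = v"
proof -
  obtain t where t: "t < length jl" "jl ! t = v" using assms by (auto simp: in_set_conv_nth)
  have "jl ! ps v = v" unfolding ps_def using t(2) by (rule LeastI)
  moreover have "ps v \<le> t" unfolding ps_def using t(2) by (rule Least_le)
  ultimately show ?thesis using t(1) by simp
qed

lemma ps_nth: "t < length jl \<Longrightarrow> ps (jl ! t) = t"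
proof -
  assume t: "t < length jl"
  then have "jl ! t \<in> set jl" by simp
  then have h: "ps (jl ! t) < length jl" "jl ! ps (jl ! t) = jl ! t" using ps_ok by blast+
  show ?thesis using nth_eq_iff_index_eq[OF jl_distinct h(1) t] h(2) by simp
qed

definition pos :: "nat \<Rightarrow> nat list" where "pos i = map ps (idx i)"

lemma pos_lt: "i < r \<Longrightarrow> t \<in> set (pos i) \<Longrightarrow> t < length jl"
  using ps_ok jl_set by (auto simp: pos_def)

lemma map_pos:
  assumes i: "i < r"
  shows "map ((!) (map ((!) x) jl)) (pos i) = map ((!) x) (idx i)"
proof -
  have "map ((!) x) jl ! ps v = x ! v" if "v \<in> set (idx i)" for v
  proof -
    have "v \<in> set jl" using that i jl_set by blast
    then show ?thesis using ps_ok by simp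
  qed
  then show ?thesis by (simp add: pos_def)
qed

lemma cover:
  assumes t: "t < length jl"
  shows "\<exists>i<r. \<exists>j<k i. pos i ! j = t"
proof -
  have "jl ! t \<in> set jl" using t by simp
  then obtain i where i: "i < r" "jl ! t \<in> set (idx i)" using jl_set by blast
  then obtain j where j: "j < k i" "idx i ! j = jl ! t" by (auto simp: in_set_conv_nth)
  have "pos i ! j = ps (jl ! t)" using j by (simp add: pos_def)
  also have "\<dots> = t" using ps_nth[OF t] .
  finally show ?thesis using i j by blast
qed

abbreviation J :: nat where "J \<equiv> length jl"

definition Q :: "nat \<Rightarrow> 'a list set" where
  "Q m = {z. length z = J \<and> (\<exists>F. finite F \<and> card F = m \<and>
      (\<forall>y\<in>F. y \<notin> A \<and> (\<forall>i<r. map ((!) z) (pos i) @ [y] \<in> C i)))}"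

lemma map_pos_snoc:
  assumes "i < r" "length z = J"
  shows "map ((!) (z @ [y])) (pos i @ [J]) = map ((!) z) (pos i) @ [y]"
  using assms pos_lt by (auto simp: nth_append)

lemma Q_def0: "definable M (P0 \<union> A) J (Q m)"
proof -
  define Dw where "Dw = ({w. length w = Suc J} \<inter>
     \<Inter> ((\<lambda>i. {w. length w = Suc J \<and> map ((!) w) (pos i @ [J]) \<in> C i}) ` {..<r})) \<inter>
     ({w. length w = Suc J} - \<Union> ((\<lambda>a. {w. length w = Suc J \<and> w ! J = a}) ` A))"
  have d1: "definable M (P0 \<union> A) (Suc J) ({w. length w = Suc J} \<inter>
     \<Inter> ((\<lambda>i. {w. length w = Suc J \<and> map ((!) w) (pos i @ [J]) \<in> C i}) ` {..<r}))"
  proof (rule def_Inter)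
    show "\<forall>i\<in>{..<r}. definable M (P0 \<union> A) (Suc J) {w. length w = Suc J \<and> map ((!) w) (pos i @ [J]) \<in> C i}"
    proof
      fix i assume "i \<in> {..<r}"
      then have i: "i < r" by simp
      have "definable M (P0 \<union> A) (Suc (k i)) (C i)" using C_def0[OF i] def_mono by blast
      then show "definable M (P0 \<union> A) (Suc J) {w. length w = Suc J \<and> map ((!) w) (pos i @ [J]) \<in> C i}"
      proof (rule def_pre)
        show "length (pos i @ [J]) = Suc (k i)" by (simp add: pos_def)
        show "\<forall>t\<in>set (pos i @ [J]). t < Suc J" using pos_lt[OF i] by (auto simp: less_Suc_eq)
      qed
    qed
  qed simp
  have d2: "definable M (P0 \<union> A) (Suc J) (\<Union> ((\<lambda>a. {w. length w = Suc J \<and> w ! J = a}) ` A))"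
    by (rule def_Union) (auto simp: A_fin intro: def_eqc)
  have dD: "definable M (P0 \<union> A) (Suc J) Dw" unfolding Dw_def
    by (rule def_inter[OF d1 def_compl[OF d2]])
  have "Q m = {z. length z = J \<and> (\<exists>F. finite F \<and> card F = m \<and> (\<forall>y\<in>F. z @ [y] \<in> Dw))}"
  proof -
    have "z @ [y] \<in> Dw \<longleftrightarrow> y \<notin> A \<and> (\<forall>i<r. map ((!) z) (pos i) @ [y] \<in> C i)" if lz: "length z = J" for z y
    proof -
      have nj: "(z @ [y]) ! J = y" using lz by (simp add: nth_append)
      have lz': "length (z @ [y]) = Suc J" using lz by simp
      have mem: "z @ [y] \<in> Dw \<longleftrightarrow> (\<forall>i<r. map ((!) (z @ [y])) (pos i @ [J]) \<in> C i) \<and> (z @ [y]) ! J \<notin> A"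
        unfolding Dw_def using lz' by blast
      have mp: "map ((!) (z @ [y])) (pos i @ [J]) = map ((!) z) (pos i) @ [y]" if "i < r" for i
        by (rule map_pos_snoc[OF that lz])
      show ?thesis unfolding mem nj using mp by (metis (no_types, lifting))
    qed
    then show ?thesis unfolding Q_def by (auto cong: conj_cong)
  qed
  then show ?thesis using def_count[OF dD, of m] by simp
qed

lemma Q_curve:
  assumes m: "0 < m"
  shows "is_curve M (acl M {}) J (Q m)"
proof (rule curve_intro[OF Q_def0])
  show "finite (P0 \<union> A)" using P0_fin A_fin by simp
  show "P0 \<union> A \<subseteq> acl M {}" using P0_acl A_acl by simp
  show "\<forall>z\<in>Q m. pw M (P0 \<union> A) z"
  proof
    fix z assume "z \<in> Q m"
    then obtain F where F: "length z = J" "finite F" "card F = m"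
      "\<forall>y\<in>F. y \<notin> A \<and> (\<forall>i<r. map ((!) z) (pos i) @ [y] \<in> C i)" unfolding Q_def by blast
    obtain y where y: "y \<in> F" using F(3) m by (metis card.empty ex_in_conv less_irrefl)
    show "pw M (P0 \<union> A) z"
    proof (rule pw_from_gen[OF exch], intro allI impI)
      fix t assume t: "t < length z"
      then have "t < J" using F(1) by simp
      then obtain i j where ij: "i < r" "j < k i" "pos i ! j = t" using cover by blast
      have inC: "map ((!) z) (pos i) @ [y] \<in> C i" using F(4) y ij(1) by blast
      have jl': "j < length (pos i)" using ij(2) by (simp add: pos_def)
      have "map ((!) z) (pos i) ! j \<in> acl M (insert y P0)"
        by (rule notA_alg[OF ij(1) _ inC]) (use F(4) y ij(2) in auto)
      then have "z ! t \<in> acl M (insert y P0)" using ij(3) jl' by simp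
      moreover have "acl M (insert y P0) \<subseteq> acl M (insert y (P0 \<union> A))" by (rule acl_mono) blast
      ultimately show "z ! t \<in> acl M (insert y (P0 \<union> A))" by blast
    qed
  qed
qed

definition Gs :: "nat \<Rightarrow> 'a list set" where
  "Gs m = {x. length x = n \<and> (\<exists>F. finite F \<and> card F = m \<and>
      (\<forall>y\<in>F. y \<notin> A \<and> (\<forall>i<r. map ((!) x) (idx i) @ [y] \<in> C i)))}"

lemma BC_Gs: "boolcomb U Cyl (Gs m)"
proof (cases "m = 0")
  case True
  then have "Gs m = U" by (auto simp: Gs_def)
  then show ?thesis using BC_U by simp
next
  case False
  have "Gs m = {x. length x = n \<and> map ((!) x) jl \<in> Q m}"
    by (auto simp: Gs_def Q_def map_pos)
  moreover have "cylinder M (acl M {}) n {x. length x = n \<and> map ((!) x) jl \<in> Q m}"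
    by (rule cyl_intro[OF jl_sorted jl_lt Q_curve]) (use False in simp)
  ultimately show ?thesis by (intro boolcomb.gen) simp
qed

end




context L37 begin

definition Hall :: "'a \<Rightarrow> 'a list set" where
  "Hall y = U \<inter> \<Inter> ((\<lambda>i. H i y) ` {..<r})"

lemma BC_Hall: "y \<in> A \<Longrightarrow> boolcomb U Cyl (Hall y)"
  unfolding Hall_def
  by (rule bc_Inter) (auto intro: boolcomb.gen H_cyl BC_U)

lemma Hall_mem: "x \<in> Hall y \<longleftrightarrow> length x = n \<and> (\<forall>i<r. map ((!) x) (idx i) @ [y] \<in> C i)"
  by (auto simp: Hall_def H_def)

definition E :: "'a set \<Rightarrow> 'a list set" where
  "E F = (U \<inter> \<Inter> (Hall ` F)) \<inter> (U \<inter> \<Inter> ((\<lambda>y. U - Hall y) ` (A - F)))"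

lemma BC_E:
  assumes F: "F \<subseteq> A"
  shows "boolcomb U Cyl (E F)"
proof -
  have fF: "finite F" using F A_fin finite_subset by blast
  have "boolcomb U Cyl (U \<inter> \<Inter> (Hall ` F))"
    by (rule bc_Inter[OF fF]) (use F BC_Hall BC_U in auto)
  moreover have "boolcomb U Cyl (U \<inter> \<Inter> ((\<lambda>y. U - Hall y) ` (A - F)))"
    by (rule bc_Inter) (use A_fin BC_Hall BC_U boolcomb.compl in auto)
  ultimately show ?thesis unfolding E_def by (rule boolcomb.inter)
qed

definition Dx :: "'a list \<Rightarrow> 'a set" where
  "Dx x = {y. \<forall>i<r. map ((!) x) (idx i) @ [y] \<in> C i}"

lemma E_mem: "x \<in> E F \<longleftrightarrow> length x = n \<and> F \<subseteq> Dx x \<and> (A - F) \<inter> Dx x = {}"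
  unfolding E_def Dx_def using Hall_mem by auto

lemma Gs_mem: "x \<in> Gs m \<longleftrightarrow> length x = n \<and> (\<exists>F'. finite F' \<and> card F' = m \<and> F' \<subseteq> Dx x - A)"
  unfolding Gs_def Dx_def by auto

lemma main:
  "boolcomb U Cyl {xs. length xs = n \<and> (\<exists>Y. finite Y \<and> card Y = d \<and> (\<forall>y\<in>Y. \<forall>i<r. map ((!) xs) (idx i) @ [y] \<in> C i))}"
proof -
  define S where "S = {xs. length xs = n \<and> (\<exists>Y. finite Y \<and> card Y = d \<and> (\<forall>y\<in>Y. \<forall>i<r. map ((!) xs) (idx i) @ [y] \<in> C i))}"
  have Smem: "x \<in> S \<longleftrightarrow> length x = n \<and> (\<exists>Y. finite Y \<and> card Y = d \<and> Y \<subseteq> Dx x)" for x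
    unfolding S_def Dx_def by auto
  have "S = \<Union> ((\<lambda>F. E F \<inter> Gs (d - card F)) ` Pow A)"
  proof (rule set_eqI, rule iffI)
    fix x assume "x \<in> S"
    then obtain Y where Y: "length x = n" "finite Y" "card Y = d" "Y \<subseteq> Dx x" using Smem by blast
    define F where "F = Dx x \<inter> A"
    have FA: "F \<in> Pow A" by (auto simp: F_def)
    have fF: "finite F" using A_fin by (auto simp: F_def)
    have xE: "x \<in> E F" using Y(1) by (auto simp: E_mem F_def)
    have "card Y \<le> card (Y \<inter> A) + card (Y - A)"
    proof -
      have "Y = (Y \<inter> A) \<union> (Y - A)" by blast
      then have "card Y = card ((Y \<inter> A) \<union> (Y - A))" by simp
      also have "\<dots> \<le> card (Y \<inter> A) + card (Y - A)" by (rule card_Un_le)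
      finally show ?thesis .
    qed
    moreover have "card (Y \<inter> A) \<le> card F"
      by (rule card_mono[OF fF]) (use Y(4) in \<open>auto simp: F_def\<close>)
    ultimately have "d - card F \<le> card (Y - A)" using Y(3) by linarith
    then obtain F' where F': "F' \<subseteq> Y - A" "card F' = d - card F" "finite F'"
      by (rule obtain_subset_with_card_n)
    have "x \<in> Gs (d - card F)" unfolding Gs_mem using Y(1,4) F' by blast
    then show "x \<in> \<Union> ((\<lambda>F. E F \<inter> Gs (d - card F)) ` Pow A)" using FA xE by blast
  next
    fix x assume "x \<in> \<Union> ((\<lambda>F. E F \<inter> Gs (d - card F)) ` Pow A)"
    then obtain F where F: "F \<subseteq> A" "x \<in> E F" "x \<in> Gs (d - card F)" by blast
    have fF: "finite F" using F(1) A_fin finite_subset by blast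
    have e: "length x = n" "F \<subseteq> Dx x" using F(2) E_mem by blast+
    obtain F' where F': "finite F'" "card F' = d - card F" "F' \<subseteq> Dx x - A" using F(3) Gs_mem by blast
    show "x \<in> S"
    proof (cases "d \<le> card F")
      case True
      then obtain Y where "Y \<subseteq> F" "card Y = d" "finite Y" by (rule obtain_subset_with_card_n)
      then show ?thesis using Smem e by blast
    next
      case False
      have disj: "F \<inter> F' = {}" using F(1) F'(3) by blast
      have "card (F \<union> F') = d" using card_Un_disjoint[OF fF F'(1) disj] F'(2) False by simp
      moreover have "F \<union> F' \<subseteq> Dx x" using e F'(3) by blast
      ultimately show ?thesis using Smem e fF F'(1) by blast
    qed
  qed
  moreover have "boolcomb U Cyl (\<Union> ((\<lambda>F. E F \<inter> Gs (d - card F)) ` Pow A))"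
  proof (rule bc_Union)
    show "finite (Pow A)" using A_fin by simp
    show "\<forall>F\<in>Pow A. boolcomb U Cyl (E F \<inter> Gs (d - card F))"
      using BC_E BC_Gs boolcomb.inter by blast
    show "boolcomb U Cyl U" by (rule BC_U)
  qed
  ultimately show ?thesis unfolding S_def by simp
qed

end

theorem lemma3p7:
  fixes M :: "('f, 'r, 'a) struct"
    and d n r :: nat
    and idx :: "nat \<Rightarrow> nat list"
    and C :: "nat \<Rightarrow> 'a list set"
  assumes "geometric M"
    and "omega_saturated M"
    and "\<forall>i<r. sorted_wrt (<) (idx i) \<and> (\<forall>j\<in>set (idx i). j < n) \<and>
              is_curve M (acl M {}) (length (idx i) + 1) (C i)"
  shows "boolcomb {xs. length xs = n} {Y. cylinder M (acl M {}) n Y}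
           {xs. length xs = n \<and>
                (\<exists>Y. finite Y \<and> card Y = d \<and>
                     (\<forall>y\<in>Y. \<forall>i<r. map ((!) xs) (idx i) @ [y] \<in> C i))}"
proof -
  interpret L37 M n r idx C using assms by unfold_locales
  show ?thesis by (rule main)
qed


end
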